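(* Let $d\ge2$, $1\le m\le d$, $x_1,\dots,x_n\in\mathbb{R}^d$ nonzero, $X$ the $d\times n$ matrix with columns $x_t$ and $\|X\|_{2,\infty}=\max_t\|x_t\|_2$. For each $t$ let $\omega_t\sim\mathrm{Beta}(\frac m2,\frac{d-m}2)$, let $\alpha_t$ be uniform on the unit sphere of $\mathbb{R}^{d-1}$ independent of $\omega_t$, let $W_t\in\mathbb{R}^{d\times(d-1)}$ have orthonormal columns spanning the orthogonal complement of $x_t$, and set $Y_{1,t}=\omega_t^2x_tx_t^T$, $Y_{2,t}=(\omega_t-\omega_t^2)\|x_t\|_2^2W_t\alpha_t\alpha_t^TW_t^T$, $Y_{3,t}=\omega_t\sqrt{\omega_t-\omega_t^2}\,\|x_t\|_2\,(x_t\alpha_t^TW_t^T+W_t\alpha_tx_t^T)$. Let $S_{1,t}=\|x_t\|_2^2x_tx_t^T$ and $S_{2,t}=\|x_t\|_2^4I_d$. Then for every integer $p\ge2$, $k\in\{1,2,3\}$ and $t\in[n]$, $$\mathbb E\,(Y_{k,t}-\mathbb EY_{k,t})^p\preceq\frac{p!}2R_k^{p-2}A_{k,t}^2,$$ with $A_{1,t}^2=1680\frac{m^4}{d^4}S_{1,t}$, $R_1=28\frac md\|X\|_{2,\infty}^2$; $A_{2,t}^2=48\frac{m^2}{d^3}S_{2,t}$, $R_2=12\frac md\|X\|_{2,\infty}^2$; $A_{3,t}^2=15\frac{m^3}{d^3}\left(\frac2dS_{2,t}+S_{1,t}\right)$, $R_3=10\frac md\|X\|_{2,\infty}^2$.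
   Context: $\preceq$ denotes the Loewner (positive semidefinite) order on symmetric matrices. $\mathrm{Beta}(a,b)$ is the Beta distribution on $[0,1]$ with density proportional to $\omega^{a-1}(1-\omega)^{b-1}$. *)

theory Defs
  imports "HOL-Probability.Probability"
begin

definition outer :: "real^'a \<Rightarrow> real^'b \<Rightarrow> real^'b^'a" where
  "outer u v = (\<chi> i j. u $ i * v $ j)"

fun matpow :: "real^'n^'n \<Rightarrow> nat \<Rightarrow> real^'n^'n" where
  "matpow A 0 = mat 1"
| "matpow A (Suc k) = A ** matpow A k"

definition loewner_le :: "real^'n^'n \<Rightarrow> real^'n^'n \<Rightarrow> bool" where
  "loewner_le A B \<longleftrightarrow> (\<forall>v. v \<bullet> ((B - A) *v v) \<ge> 0)"

definition beta_density :: "real \<Rightarrow> real \<Rightarrow> real \<Rightarrow> ennreal" where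
  "beta_density a b w =
     ennreal (indicator {0<..<1} w * w powr (a - 1) * (1 - w) powr (b - 1) / Beta a b)"

text \<open>A random variable is Beta(a,b)-distributed.  For b = 0 (the case m = d) the
  Beta law degenerates to the point mass at 1.\<close>
definition (in prob_space) beta_distributed :: "('a \<Rightarrow> real) \<Rightarrow> real \<Rightarrow> real \<Rightarrow> bool" where
  "beta_distributed X a b \<longleftrightarrow>
     (if b = 0 then random_variable borel X \<and> (AE w in M. X w = 1)
      else distributed M lborel X (beta_density a b))"

text \<open>Uniform (normalised surface) measure on the unit sphere of real^'e,
  realised as the cone measure: push-forward of the uniform law on the unit ball
  under v \<mapsto> v/|v|.\<close>
definition uniform_sphere :: "(real^'e) measure" where
  "uniform_sphere = distr (uniform_measure lborel (ball 0 1)) borel sgn"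

definition Ymat :: "nat \<Rightarrow> real \<Rightarrow> real^'e \<Rightarrow> real^'e^'d \<Rightarrow> real^'d \<Rightarrow> real^'d^'d" where
  "Ymat k w a W x =
     (if k = 1 then (w^2) *\<^sub>R outer x x
      else if k = 2 then ((w - w^2) * norm x ^ 2) *\<^sub>R (W ** outer a a ** transpose W)
      else (w * sqrt (w - w^2) * norm x) *\<^sub>R
             (outer x a ** transpose W + W ** outer a x))"

definition S1 :: "real^'d \<Rightarrow> real^'d^'d" where
  "S1 x = (norm x ^ 2) *\<^sub>R outer x x"

definition S2 :: "real^'d \<Rightarrow> real^'d^'d" where
  "S2 x = (norm x ^ 4) *\<^sub>R mat 1"

definition Asq :: "nat \<Rightarrow> real \<Rightarrow> real \<Rightarrow> real^'d \<Rightarrow> real^'d^'d" where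
  "Asq k m d x =
     (if k = 1 then (1680 * m^4 / d^4) *\<^sub>R S1 x
      else if k = 2 then (48 * m^2 / d^3) *\<^sub>R S2 x
      else (15 * m^3 / d^3) *\<^sub>R ((2 / d) *\<^sub>R S2 x + S1 x))"

definition Rk :: "nat \<Rightarrow> real \<Rightarrow> real \<Rightarrow> real \<Rightarrow> real" where
  "Rk k m d Xn = (if k = 1 then 28 else if k = 2 then 12 else 10) * (m / d) * Xn^2"

end

theory Submission
  imports Defs
begin


lemma (in prob_space) indep_from_hyp:
  fixes X :: "'a \<Rightarrow> real" and Y :: "'a \<Rightarrow> 'b::topological_space"
    and f :: "real \<Rightarrow> real" and g :: "'b \<Rightarrow> real"
  assumes X: "X \<in> borel_measurable M" and Y: "Y \<in> borel_measurable M"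
    and f: "f \<in> borel_measurable borel" and g: "g \<in> borel_measurable borel"
    and h: "\<forall>A\<in>sets (borel :: real measure). \<forall>B\<in>sets (borel :: 'b measure).
         measure M (X -` A \<inter> Y -` B \<inter> space M)
         = measure M (X -` A \<inter> space M) * measure M (Y -` B \<inter> space M)"
  shows "indep_var borel (\<lambda>z. f (X z)) borel (\<lambda>z. g (Y z))"
proof -
  have fX: "(\<lambda>z. f (X z)) \<in> borel_measurable M" using X f by measurable
  have gY: "(\<lambda>z. g (Y z)) \<in> borel_measurable M" using Y g by measurable
  have s: "sigma_sets (space M) {F -` A \<inter> space M | A. A \<in> sets borel} = {F -` A \<inter> space M | A. A \<in> sets borel}"
    if F: "F \<in> borel_measurable M" for F :: "'a \<Rightarrow> real"
  proof -
    have "sigma_algebra (space M) (sets (vimage_algebra (space M) F borel))"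
      using sets.sigma_algebra_axioms[of "vimage_algebra (space M) F borel"] by (simp add: space_vimage_algebra)
    moreover have "sets (vimage_algebra (space M) F borel) = {F -` A \<inter> space M | A. A \<in> sets borel}"
      by (auto simp: sets_vimage_algebra2[OF F[unfolded measurable_def, THEN CollectD, THEN conjunct1]])
    ultimately show ?thesis by (simp add: sigma_algebra.sigma_sets_eq)
  qed
  show ?thesis
    unfolding indep_var_eq indep_sets2_eq
    apply (simp only: s[OF fX] s[OF gY])
    apply (intro conjI fX gY)
    apply (auto intro!: measurable_sets fX gY)[2]
    apply safe
    subgoal for _ _ A B
      using h[rule_format, of "f -` A" "g -` B"] f g
      by (simp add: measurable_sets_borel Int_assoc Int_commute Int_left_commute vimage_def)
    done
qed


definition sperm :: "('e::finite \<Rightarrow> 'e) \<Rightarrow> ('e \<Rightarrow> real) \<Rightarrow> real^'e \<Rightarrow> real^'e" where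
  "sperm \<pi> c v = (\<chi> i. c i * v $ \<pi> i)"

lemma prod_Basis_vec: "(\<Prod>b\<in>Basis. (x::real^'n::finite) \<bullet> b) = (\<Prod>i\<in>UNIV. x $ i)"
proof -
  have "Basis = (\<lambda>i. axis i (1::real)) ` UNIV" by (auto simp: Basis_vec_def)
  moreover have "inj (\<lambda>i. axis i (1::real))" by (auto simp: inj_def axis_eq_axis)
  ultimately show ?thesis
    by (metis (no_types, lifting) cart_eq_inner_axis prod.reindex_cong)
qed

lemma sperm_linear: "linear (sperm \<pi> c)"
  by (auto simp: linear_iff sperm_def vec_eq_iff algebra_simps)

lemma sperm_meas[measurable]: "sperm \<pi> c \<in> borel_measurable borel"
  using linear_conv_bounded_linear sperm_linear
  by (intro borel_measurable_continuous_onI linear_continuous_on) blast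

lemma lborel_sperm:
  fixes \<pi> :: "'e::finite \<Rightarrow> 'e"
  assumes "bij \<pi>" and c: "\<And>i. c i = 1 \<or> c i = -1"
  shows "distr lborel borel (sperm \<pi> c) = lborel"
proof (rule lborel_eqI[symmetric])
  show "sets (distr lborel borel (sperm \<pi> c)) = sets borel" by simp
  fix l u :: "real^'e"
  assume le: "\<And>b. b \<in> Basis \<Longrightarrow> l \<bullet> b \<le> u \<bullet> b"
  have leI: "l $ i \<le> u $ i" for i using le[of "axis i 1"] by (auto simp: Basis_vec_def inner_axis)
  define \<rho> where "\<rho> = inv \<pi>"
  have \<rho>: "\<pi> (\<rho> j) = j" "\<rho> (\<pi> i) = i" for i j
    using assms(1) by (auto simp: \<rho>_def bij_def surj_f_inv_f inv_f_f)
  define l' :: "real^'e" where "l' = (\<chi> j. if c (\<rho> j) = 1 then l $ \<rho> j else - u $ \<rho> j)"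
  define u' :: "real^'e" where "u' = (\<chi> j. if c (\<rho> j) = 1 then u $ \<rho> j else - l $ \<rho> j)"
  have coord: "(l $ i < c i * y \<and> c i * y < u $ i) \<longleftrightarrow> (l' $ \<pi> i < y \<and> y < u' $ \<pi> i)" for i y
    using c[of i] by (auto simp: l'_def u'_def \<rho>)
  have pre: "sperm \<pi> c -` box l u = box l' u'"
  proof (rule set_eqI)
    fix x
    have "x \<in> sperm \<pi> c -` box l u \<longleftrightarrow> (\<forall>i. l' $ \<pi> i < x $ \<pi> i \<and> x $ \<pi> i < u' $ \<pi> i)"
      by (simp add: mem_box_cart sperm_def coord)
    also have "\<dots> \<longleftrightarrow> (\<forall>j. l' $ j < x $ j \<and> x $ j < u' $ j)"
      by (metis \<rho>(1))
    finally show "x \<in> sperm \<pi> c -` box l u \<longleftrightarrow> x \<in> box l' u'" by (simp add: mem_box_cart)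
  qed
  have "(\<Prod>b\<in>Basis. (u' - l') \<bullet> b) = (\<Prod>j\<in>UNIV. (u' - l') $ j)" by (rule prod_Basis_vec)
  also have "\<dots> = (\<Prod>j\<in>UNIV. (u - l) $ \<rho> j)"
    by (intro prod.cong refl) (auto simp: u'_def l'_def)
  also have "\<dots> = (\<Prod>i\<in>UNIV. (u - l) $ i)"
  proof -
    have "bij \<rho>" using assms(1) by (simp add: \<rho>_def bij_imp_bij_inv)
    then show ?thesis by (rule prod.reindex_bij_betw[of \<rho> UNIV UNIV "\<lambda>i. (u-l)$i"])
  qed
  also have "\<dots> = (\<Prod>b\<in>Basis. (u - l) \<bullet> b)" by (rule prod_Basis_vec[symmetric])
  finally have P: "(\<Prod>b\<in>Basis. (u' - l') \<bullet> b) = (\<Prod>b\<in>Basis. (u - l) \<bullet> b)" .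
  have le': "\<forall>b\<in>Basis. l' \<bullet> b \<le> u' \<bullet> b"
    using leI by (auto simp: Basis_vec_def inner_axis l'_def u'_def)
  show "emeasure (distr lborel borel (sperm \<pi> c)) (box l u) = (\<Prod>b\<in>Basis. (u - l) \<bullet> b)"
    by (simp add: emeasure_distr pre emeasure_lborel_box_eq le' P)
qed


abbreviation "Uball \<equiv> uniform_measure lborel (ball (0::real^'e::finite) 1)"

lemma ball_pos: "emeasure lborel (ball (0::real^'e::finite) 1) \<noteq> 0"
proof
  assume "emeasure lborel (ball (0::real^'e::finite) 1) = 0"
  then have "measure lborel (ball (0::real^'e::finite) 1) = 0" by (simp add: measure_def)
  with content_ball_pos[of 1 "0::real^'e"] show False by simp
qed

lemma ball_fin: "emeasure lborel (ball (0::real^'e::finite) 1) \<noteq> \<infinity>"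
  using emeasure_lborel_ball_finite by (metis less_irrefl)

lemma prob_Uball: "prob_space (Uball :: (real^'e::finite) measure)"
  by (rule prob_space_uniform_measure[OF ball_pos ball_fin])

lemma prob_sphere: "prob_space (uniform_sphere :: (real^'e::finite) measure)"
  unfolding uniform_sphere_def
  by (rule prob_space.prob_space_distr[OF prob_Uball]) simp

lemma norm_sperm:
  assumes "bij \<pi>" and c: "\<And>i. c i = 1 \<or> c i = -1"
  shows "norm (sperm \<pi> c v) = norm v"
proof -
  have "sperm \<pi> c v \<bullet> sperm \<pi> c v = (\<Sum>i\<in>UNIV. (v $ \<pi> i)^2)"
  proof -
    have c2: "(c i)^2 = 1" for i using c[of i] by auto
    show ?thesis unfolding inner_vec_def sperm_def
      by (intro sum.cong) (simp_all add: power2_eq_square[symmetric] power_mult_distrib c2)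
  qed
  also have "\<dots> = (\<Sum>i\<in>UNIV. (v $ i)^2)"
    using sum.reindex_bij_betw[of \<pi> UNIV UNIV "\<lambda>i. (v$i)^2"] assms(1) by simp
  also have "\<dots> = v \<bullet> v" by (simp add: inner_vec_def power2_eq_square)
  finally show ?thesis by (simp add: norm_eq_sqrt_inner)
qed

lemma sgn_sperm:
  assumes "bij \<pi>" and c: "\<And>i. c i = 1 \<or> c i = -1"
  shows "sgn (sperm \<pi> c v) = sperm \<pi> c (sgn v)"
  by (simp add: sgn_div_norm norm_sperm[OF assms]) (simp add: sperm_def vec_eq_iff)

lemma Uball_sperm:
  assumes "bij \<pi>" and c: "\<And>i. c i = 1 \<or> c i = -1"
  shows "distr Uball borel (sperm \<pi> c) = (Uball :: (real^'e::finite) measure)"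
proof (rule measure_eqI)
  show "sets (distr Uball borel (sperm \<pi> c)) = sets (Uball :: (real^'e) measure)" by simp
  fix B :: "(real^'e) set" assume "B \<in> sets (distr Uball borel (sperm \<pi> c))"
  then have B: "B \<in> sets borel" by simp
  have pre: "sperm \<pi> c -` (ball 0 1 \<inter> B) = ball 0 1 \<inter> sperm \<pi> c -` B"
    using norm_sperm[OF assms] by auto
  have mL: "sperm \<pi> c \<in> measurable lborel borel" using sperm_meas by simp
  have m: "sperm \<pi> c \<in> measurable Uball borel" using sperm_meas by simp
  have TB: "sperm \<pi> c -` B \<in> sets lborel" using measurable_sets_borel[OF sperm_meas B] by simp
  have bB: "ball 0 1 \<inter> B \<in> sets borel" using B by simp
  have "emeasure (distr Uball borel (sperm \<pi> c)) B = emeasure Uball (sperm \<pi> c -` B \<inter> space Uball)"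
    by (rule emeasure_distr[OF m B])
  also have "\<dots> = emeasure Uball (sperm \<pi> c -` B)" by simp
  also have "\<dots> = emeasure lborel (ball 0 1 \<inter> sperm \<pi> c -` B) / emeasure lborel (ball (0::real^'e) 1)"
    by (rule emeasure_uniform_measure[OF _ TB]) simp
  also have "emeasure lborel (ball 0 1 \<inter> sperm \<pi> c -` B) = emeasure (distr lborel borel (sperm \<pi> c)) (ball 0 1 \<inter> B)"
    using emeasure_distr[OF mL bB] pre by simp
  also have "\<dots> = emeasure lborel (ball 0 1 \<inter> B)" by (simp only: lborel_sperm[OF assms])
  also have "emeasure lborel (ball 0 1 \<inter> B) / emeasure lborel (ball (0::real^'e) 1) = emeasure Uball B"
    by (rule emeasure_uniform_measure[symmetric]) (simp_all add: B)
  finally show "emeasure (distr Uball borel (sperm \<pi> c)) B = emeasure Uball B" .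
qed

lemma sphere_sperm:
  assumes "bij \<pi>" and c: "\<And>i. c i = 1 \<or> c i = -1"
  shows "distr uniform_sphere borel (sperm \<pi> c) = (uniform_sphere :: (real^'e::finite) measure)"
proof -
  have sg: "sgn \<in> measurable (Uball :: (real^'e) measure) borel"
    using borel_measurable_sgn by simp
  have sp: "sperm \<pi> c \<in> measurable (Uball :: (real^'e) measure) borel"
    using sperm_meas by simp
  have "distr uniform_sphere borel (sperm \<pi> c) = distr (Uball :: (real^'e) measure) borel (sperm \<pi> c \<circ> sgn)"
    unfolding uniform_sphere_def by (rule distr_distr[OF sperm_meas sg])
  also have "sperm \<pi> c \<circ> sgn = sgn \<circ> sperm \<pi> c" using sgn_sperm[OF assms] by auto
  also have "distr (Uball :: (real^'e) measure) borel (sgn \<circ> sperm \<pi> c) = distr (distr Uball borel (sperm \<pi> c)) borel sgn"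
    by (rule distr_distr[symmetric, OF borel_measurable_sgn sp])
  also have "\<dots> = uniform_sphere" by (simp add: Uball_sperm[OF assms] uniform_sphere_def)
  finally show ?thesis .
qed

lemma sphere_integral_sperm:
  fixes h :: "real^'e::finite \<Rightarrow> real"
  assumes "bij \<pi>" and c: "\<And>i. c i = 1 \<or> c i = -1" and h: "h \<in> borel_measurable borel"
  shows "integral\<^sup>L uniform_sphere (\<lambda>a. h (sperm \<pi> c a)) = integral\<^sup>L uniform_sphere h"
proof -
  have "integral\<^sup>L (distr uniform_sphere borel (sperm \<pi> c)) h = integral\<^sup>L uniform_sphere (\<lambda>a. h (sperm \<pi> c a))"
  proof (rule integral_distr[OF _ h])
    show "sperm \<pi> c \<in> measurable uniform_sphere borel" by (simp add: uniform_sphere_def)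
  qed
  then show ?thesis by (simp add: sphere_sperm[OF assms(1) c])
qed

lemma sphere_AE_norm: "AE a in (uniform_sphere :: (real^'e::finite) measure). norm a = 1"
proof -
  have "AE v in (Uball :: (real^'e) measure). norm (sgn v) = 1"
    by (rule AE_uniform_measureI) (auto intro: AE_mp[OF AE_lborel_singleton[of 0]] simp: norm_sgn)
  then show ?thesis unfolding uniform_sphere_def
    using borel_measurable_sgn by (subst AE_distr_iff) auto
qed


lemma nth_meas[measurable]: "(\<lambda>a::real^'e::finite. a $ i) \<in> borel_measurable borel"
  by (intro borel_measurable_continuous_onI continuous_intros)

lemma sphere_integrable_bounded:
  fixes f :: "real^'e::finite \<Rightarrow> real"
  assumes "f \<in> borel_measurable borel" and "\<And>a. norm a = 1 \<Longrightarrow> \<bar>f a\<bar> \<le> B"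
  shows "integrable uniform_sphere f"
proof -
  interpret prob_space "uniform_sphere :: (real^'e) measure" by (rule prob_sphere)
  show ?thesis
    by (rule integrable_const_bound[where B=B])
       (use sphere_AE_norm assms in \<open>auto simp: uniform_sphere_def elim!: AE_mp\<close>)
qed

lemma comp_le1: "norm (a::real^'e::finite) = 1 \<Longrightarrow> \<bar>a $ i\<bar> \<le> 1"
  using component_le_norm_cart[of a i] by simp

lemma sphere_int1: "integrable uniform_sphere (\<lambda>a::real^'e::finite. a $ i)"
  by (rule sphere_integrable_bounded[where B=1]) (auto simp: comp_le1)

lemma sphere_int2: "integrable uniform_sphere (\<lambda>a::real^'e::finite. a $ i * a $ j)"
proof (rule sphere_integrable_bounded[where B=1])
  fix a :: "real^'e" assume "norm a = 1"
  then show "\<bar>a $ i * a $ j\<bar> \<le> 1" using comp_le1[of a i] comp_le1[of a j]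
    by (simp add: abs_mult mult_le_one)
qed simp

definition flip :: "'e \<Rightarrow> 'e \<Rightarrow> real" where "flip i = (\<lambda>k. if k = i then -1 else 1)"
definition swp :: "'e \<Rightarrow> 'e \<Rightarrow> 'e \<Rightarrow> 'e" where "swp i j = (\<lambda>k. if k = i then j else if k = j then i else k)"

lemma flip_ok: "flip i k = 1 \<or> flip i k = -1" by (simp add: flip_def)
lemma swp_bij: "bij (swp i j)"
  by (rule o_bij[of "swp i j"]) (auto simp: swp_def fun_eq_iff)

lemma sphere_mean: "integral\<^sup>L uniform_sphere (\<lambda>a::real^'e::finite. a $ i) = 0"
proof -
  have "integral\<^sup>L uniform_sphere (\<lambda>a::real^'e. (sperm id (flip i) a) $ i) = integral\<^sup>L uniform_sphere (\<lambda>a::real^'e. a $ i)"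
    by (rule sphere_integral_sperm[where \<pi>=id and c="flip i", OF bij_id flip_ok nth_meas])
  moreover have "(\<lambda>a::real^'e. (sperm id (flip i) a) $ i) = (\<lambda>a. - (a $ i))"
    by (simp add: sperm_def flip_def)
  ultimately show ?thesis by simp
qed

lemma sphere_cross: "i \<noteq> j \<Longrightarrow> integral\<^sup>L uniform_sphere (\<lambda>a::real^'e::finite. a $ i * a $ j) = 0"
proof -
  assume ij: "i \<noteq> j"
  have "integral\<^sup>L uniform_sphere (\<lambda>a::real^'e. (sperm id (flip i) a) $ i * (sperm id (flip i) a) $ j) = integral\<^sup>L uniform_sphere (\<lambda>a::real^'e. a $ i * a $ j)"
    by (rule sphere_integral_sperm[where \<pi>=id and c="flip i" and h="\<lambda>a. a $ i * a $ j", OF bij_id flip_ok]) simp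
  moreover have "(\<lambda>a::real^'e. (sperm id (flip i) a) $ i * (sperm id (flip i) a) $ j) = (\<lambda>a. - (a $ i * a $ j))"
    using ij by (simp add: sperm_def flip_def)
  ultimately show ?thesis by simp
qed

lemma sphere_diag_eq: "integral\<^sup>L uniform_sphere (\<lambda>a::real^'e::finite. a $ i * a $ i) = integral\<^sup>L uniform_sphere (\<lambda>a::real^'e::finite. a $ j * a $ j)"
proof -
  have "integral\<^sup>L uniform_sphere (\<lambda>a::real^'e. (sperm (swp i j) (\<lambda>_. 1) a) $ i * (sperm (swp i j) (\<lambda>_. 1) a) $ i) = integral\<^sup>L uniform_sphere (\<lambda>a::real^'e. a $ i * a $ i)"
    by (rule sphere_integral_sperm[where \<pi>="swp i j" and c="\<lambda>_. 1" and h="\<lambda>a. a $ i * a $ i", OF swp_bij]) simp_all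
  moreover have "(\<lambda>a::real^'e. (sperm (swp i j) (\<lambda>_. 1) a) $ i * (sperm (swp i j) (\<lambda>_. 1) a) $ i) = (\<lambda>a. a $ j * a $ j)"
    by (simp add: sperm_def swp_def)
  ultimately show ?thesis by simp
qed

lemma sphere_diag: "integral\<^sup>L uniform_sphere (\<lambda>a::real^'e::finite. a $ i * a $ i) = 1 / CARD('e)"
proof -
  interpret prob_space "uniform_sphere :: (real^'e) measure" by (rule prob_sphere)
  have "(\<Sum>j\<in>UNIV. integral\<^sup>L uniform_sphere (\<lambda>a::real^'e. a $ j * a $ j)) = integral\<^sup>L uniform_sphere (\<lambda>a::real^'e. \<Sum>j\<in>UNIV. a $ j * a $ j)"
    by (simp add: sphere_int2)
  also have "\<dots> = integral\<^sup>L uniform_sphere (\<lambda>a::real^'e. 1)"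
  proof (rule integral_cong_AE)
    show "AE a in uniform_sphere. (\<Sum>j\<in>UNIV. a $ j * a $ j) = (1::real)"
      using sphere_AE_norm by (rule AE_mp) (auto simp: norm_eq_sqrt_inner inner_vec_def)
  qed (simp_all add: uniform_sphere_def)
  also have "\<dots> = 1" using prob_space.prob_space[OF prob_sphere] by simp
  finally have s1: "(\<Sum>j\<in>UNIV. integral\<^sup>L uniform_sphere (\<lambda>a::real^'e. a $ j * a $ j)) = 1" .
  have "(\<Sum>j\<in>UNIV. integral\<^sup>L uniform_sphere (\<lambda>a::real^'e. a $ j * a $ j)) = (\<Sum>j\<in>(UNIV::'e set). integral\<^sup>L uniform_sphere (\<lambda>a::real^'e. a $ i * a $ i))"
    by (rule sum.cong[OF refl]) (rule sphere_diag_eq)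
  with s1 have "real CARD('e) * integral\<^sup>L uniform_sphere (\<lambda>a::real^'e. a $ i * a $ i) = 1"
    by simp
  then show ?thesis by (simp add: field_simps)
qed

lemma sphere_inner_mean: "integral\<^sup>L uniform_sphere (\<lambda>a::real^'e::finite. a \<bullet> u) = 0"
proof -
  have "integral\<^sup>L uniform_sphere (\<lambda>a::real^'e. a \<bullet> u) = integral\<^sup>L uniform_sphere (\<lambda>a::real^'e. \<Sum>i\<in>UNIV. a $ i * u $ i)"
    by (simp add: inner_vec_def)
  also have "\<dots> = (\<Sum>i\<in>UNIV. integral\<^sup>L uniform_sphere (\<lambda>a::real^'e. a $ i * u $ i))"
    by (simp add: sphere_int1)
  also have "\<dots> = 0" by (simp add: sphere_mean)
  finally show ?thesis .
qed

lemma sphere_inner2: "integral\<^sup>L uniform_sphere (\<lambda>a::real^'e::finite. (a \<bullet> u) * (a \<bullet> w)) = (u \<bullet> w) / CARD('e)"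
proof -
  have "integral\<^sup>L uniform_sphere (\<lambda>a::real^'e. (a \<bullet> u) * (a \<bullet> w)) = integral\<^sup>L uniform_sphere (\<lambda>a::real^'e. \<Sum>i\<in>UNIV. \<Sum>j\<in>UNIV. u $ i * w $ j * (a $ i * a $ j))"
    by (simp add: inner_vec_def sum_product algebra_simps)
  also have "\<dots> = (\<Sum>i\<in>UNIV. \<Sum>j\<in>UNIV. u $ i * w $ j * integral\<^sup>L uniform_sphere (\<lambda>a::real^'e. a $ i * a $ j))"
    by (simp add: Bochner_Integration.integral_sum sphere_int2 integrable_sum)
  also have "\<dots> = (\<Sum>i\<in>UNIV. u $ i * w $ i / CARD('e))"
  proof (rule sum.cong[OF refl])
    fix i
    have "(\<Sum>j\<in>UNIV. u $ i * w $ j * integral\<^sup>L uniform_sphere (\<lambda>a::real^'e. a $ i * a $ j))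
        = (\<Sum>j\<in>{i}. u $ i * w $ j * integral\<^sup>L uniform_sphere (\<lambda>a::real^'e. a $ i * a $ j))"
      by (rule sum.mono_neutral_right) (auto simp: sphere_cross)
    then show "(\<Sum>j\<in>UNIV. u $ i * w $ j * integral\<^sup>L uniform_sphere (\<lambda>a::real^'e. a $ i * a $ j)) = u $ i * w $ i / CARD('e)"
      by (simp add: sphere_diag)
  qed
  also have "\<dots> = (u \<bullet> w) / CARD('e)" by (simp add: inner_vec_def sum_divide_distrib)
  finally show ?thesis .
qed


lemma Beta_pos: "a > 0 \<Longrightarrow> b > 0 \<Longrightarrow> Beta a b > (0::real)"
  by (simp add: Beta_def Gamma_real_pos)

definition betaF :: "real \<Rightarrow> real \<Rightarrow> real \<Rightarrow> real" where
  "betaF a b w = indicator {0<..<1} w * w powr (a - 1) * (1 - w) powr (b - 1) / Beta a b"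

lemma betaF_meas[measurable]: "betaF a b \<in> borel_measurable borel"
  unfolding betaF_def by measurable

lemma betaF_nonneg: "a > 0 \<Longrightarrow> b > 0 \<Longrightarrow> betaF a b w \<ge> 0"
  unfolding betaF_def using Beta_pos[of a b] by (auto simp: indicator_def)

lemma beta_density_eq: "beta_density a b = (\<lambda>w. ennreal (betaF a b w))"
  by (simp add: beta_density_def betaF_def fun_eq_iff)

lemma betaF_moment:
  assumes a: "a > 0" and b: "b > 0"
  shows "integral\<^sup>L lborel (\<lambda>w. betaF a b w * w ^ n) = Beta (a + real n) b / Beta a b"
proof -
  let ?G = "\<lambda>t. t powr (a + real n - 1) * (1 - t) powr (b - 1)"
  have hG: "(?G has_integral Beta (a + real n) b) {0..1}"
    by (rule has_integral_Beta_real) (use a b in auto)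
  have hG': "((\<lambda>t. indicator {0<..<1} t * ?G t) has_integral Beta (a + real n) b) UNIV"
  proof -
    have "((\<lambda>t. if t \<in> {0..1} then ?G t else 0) has_integral Beta (a + real n) b) UNIV"
      using hG by (simp only: has_integral_restrict_UNIV)
    then show ?thesis
    proof (rule has_integral_spike[rotated 2])
      show "negligible {0, 1::real}" by simp
    qed (auto simp: indicator_def)
  qed
  define B where "B = Beta a b"
  have Bpos: "B > 0" using Beta_pos[OF a b] by (simp add: B_def)
  have eq: "betaF a b w * w ^ n = indicator {0<..<1} w * ?G w / B" for w
  proof (cases "w \<in> {0<..<1}")
    case True
    then have "w powr (a - 1) * w ^ n = w powr (a + real n - 1)"
      by (simp add: powr_add[symmetric] powr_realpow[symmetric] algebra_simps)
    then show ?thesis using True by (simp add: betaF_def B_def)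
  qed (auto simp: betaF_def indicator_def)
  have h: "((\<lambda>w. betaF a b w * w ^ n) has_integral Beta (a + real n) b / B) UNIV"
    unfolding eq using has_integral_divide[OF hG', of B] by simp
  have nn: "0 \<le> betaF a b w * w ^ n" for w
    using eq[of w] Bpos a b by (auto simp: indicator_def intro!: divide_nonneg_pos)
  have "integral\<^sup>N lborel (\<lambda>w. betaF a b w * w ^ n) = Beta (a + real n) b / B"
    by (rule nn_integral_has_integral_lborel[OF _ nn h]) measurable
  moreover have "integral\<^sup>L lborel (\<lambda>w. betaF a b w * w ^ n) = enn2real (integral\<^sup>N lborel (\<lambda>w. ennreal (betaF a b w * w ^ n)))"
    by (rule integral_eq_nn_integral) (auto simp: nn)
  moreover have "Beta (a + real n) b \<ge> 0" using Beta_pos[of "a + real n" b] a b by simp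
  ultimately show ?thesis using Bpos by (simp add: B_def)
qed

context prob_space begin

lemma beta_meas:
  assumes "beta_distributed X a b"
  shows "X \<in> borel_measurable M"
  using assms unfolding beta_distributed_def
  by (auto split: if_splits dest: distributed_measurable)

lemma beta_AE01:
  assumes "beta_distributed X a b" and b: "b \<ge> 0"
  shows "AE z in M. 0 \<le> X z \<and> X z \<le> 1"
proof (cases "b = 0")
  case True
  then show ?thesis using assms by (auto simp: beta_distributed_def elim: AE_mp)
next
  case False
  then have d: "distributed M lborel X (beta_density a b)" using assms by (simp add: beta_distributed_def)
  have X: "X \<in> measurable M lborel" using distributed_measurable[OF d] by simp
  have A: "AE w in density lborel (beta_density a b). 0 \<le> w \<and> w \<le> 1"
    unfolding beta_density_eq by (subst AE_density) (auto simp: betaF_def indicator_def)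
  have "AE w in distr M lborel X. 0 \<le> w \<and> w \<le> 1"
    unfolding distributed_distr_eq_density[OF d] by (fact A)
  then show ?thesis by (subst (asm) AE_distr_iff[OF X]) auto
qed

lemma beta_moment:
  assumes "beta_distributed X a b" and a: "a > 0" and b: "b \<ge> 0"
  shows "expectation (\<lambda>z. X z ^ n) = (if b = 0 then 1 else Beta (a + real n) b / Beta a b)"
proof (cases "b = 0")
  case True
  then have "AE z in M. X z = 1" using assms by (simp add: beta_distributed_def)
  then have "expectation (\<lambda>z. X z ^ n) = expectation (\<lambda>z. 1)"
    by (intro integral_cong_AE) (auto elim: AE_mp intro!: borel_measurable_power beta_meas[OF assms(1)])
  then show ?thesis using True prob_space by simp
next
  case False
  then have b': "b > 0" using b by simp
  then have d: "distributed M lborel X (beta_density a b)" using assms by (simp add: beta_distributed_def)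
  have X: "X \<in> measurable M lborel" using distributed_measurable[OF d] by simp
  have "expectation (\<lambda>z. X z ^ n) = integral\<^sup>L (distr M lborel X) (\<lambda>w. w ^ n)"
    by (rule integral_distr[OF X, symmetric]) simp
  also have "\<dots> = integral\<^sup>L (density lborel (\<lambda>w. ennreal (betaF a b w))) (\<lambda>w. w ^ n)"
    using distributed_distr_eq_density[OF d] by (simp add: beta_density_eq)
  also have "\<dots> = integral\<^sup>L lborel (\<lambda>w. betaF a b w * w ^ n)"
    by (subst integral_density) (auto simp: betaF_nonneg a b')
  also have "\<dots> = Beta (a + real n) b / Beta a b" by (rule betaF_moment[OF a b'])
  finally show ?thesis using False by simp
qed

lemma beta_moment_Suc:
  assumes "beta_distributed X a b" and a: "a > 0" and b: "b \<ge> 0"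
  shows "expectation (\<lambda>z. X z ^ Suc n) = (a + n) / (a + b + n) * expectation (\<lambda>z. X z ^ n)"
proof (cases "b = 0")
  case True then show ?thesis using beta_moment[OF assms, of n] beta_moment[OF assms, of "Suc n"] a by simp
next
  case False
  have nz: "a + real n \<notin> \<int>\<^sub>\<le>\<^sub>0" using a nonpos_Ints_nonpos[of "a + real n"] by force
  have "(a + real n + b) * Beta (a + real n + 1) b = (a + real n) * Beta (a + real n) b"
    by (rule Beta_plus1_left[OF nz])
  moreover have "a + real n + b > 0" using a b by simp
  ultimately have "Beta (a + real (Suc n)) b = (a + real n) / (a + b + real n) * Beta (a + real n) b"
    by (simp add: field_simps)
  then show ?thesis using beta_moment[OF assms, of n] beta_moment[OF assms, of "Suc n"] False
    by simp
qed

end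


definition dfac :: "nat \<Rightarrow> real" where "dfac n = (\<Prod>l<n. 2 * real l + 1)"

lemma dfac_Suc: "dfac (Suc n) = (2 * real n + 1) * dfac n"
  by (simp add: dfac_def)
lemma dfac_pos: "dfac n > 0" by (simp add: dfac_def prod_pos)
lemma dfac_2: "dfac 2 = 3" by (simp add: dfac_def eval_nat_numeral)

lemma comb1: "p \<ge> 2 \<Longrightarrow> dfac (p + 2) + 3 ^ p \<le> 840 * 28 ^ (p - 2) * fact p"
proof (induction p rule: nat_induct_at_least)
  case base then show ?case by (simp add: dfac_def eval_nat_numeral)
next
  case (Suc n)
  have "dfac (Suc n + 2) = (2 * real (n + 2) + 1) * dfac (n + 2)" by (simp add: dfac_Suc)
  also have "\<dots> \<le> (28 * real (Suc n)) * dfac (n + 2)"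
    using dfac_pos[of "n+2"] Suc.hyps by (intro mult_right_mono) auto
  finally have a: "dfac (Suc n + 2) \<le> 28 * real (Suc n) * dfac (n + 2)" .
  have b: "(3::real) ^ Suc n \<le> 28 * real (Suc n) * 3 ^ n" by simp
  have "dfac (Suc n + 2) + 3 ^ Suc n \<le> 28 * real (Suc n) * (dfac (n + 2) + 3 ^ n)"
    using add_mono[OF a b] by (simp only: distrib_left)
  also have "\<dots> \<le> 28 * real (Suc n) * (840 * 28 ^ (n - 2) * fact n)"
    using Suc.IH by (intro mult_left_mono) auto
  also have "\<dots> = 840 * 28 ^ (Suc n - 2) * fact (Suc n)"
  proof -
    have pw: "Suc n - 2 = Suc (n - 2)" using Suc.hyps by simp
    show ?thesis unfolding pw by (simp add: algebra_simps)
  qed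
  finally show ?case .
qed

lemma comb2: "p \<ge> 2 \<Longrightarrow> dfac p + 2 \<le> 12 * 12 ^ (p - 2) * fact p"
proof (induction p rule: nat_induct_at_least)
  case base then show ?case by (simp add: dfac_def eval_nat_numeral)
next
  case (Suc n)
  have a: "dfac (Suc n) \<le> 12 * real (Suc n) * dfac n"
    unfolding dfac_Suc using dfac_pos[of n] by (intro mult_right_mono) auto
  have "dfac (Suc n) + 2 \<le> 12 * real (Suc n) * (dfac n + 2)"
    using a by (simp add: distrib_left)
  also have "\<dots> \<le> 12 * real (Suc n) * (12 * 12 ^ (n - 2) * fact n)"
    using Suc.IH by (intro mult_left_mono) auto
  also have "\<dots> = 12 * 12 ^ (Suc n - 2) * fact (Suc n)"
  proof -
    have pw: "Suc n - 2 = Suc (n - 2)" using Suc.hyps by simp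
    show ?thesis unfolding pw by (simp add: algebra_simps)
  qed
  finally show ?case .
qed

lemma comb3: "p \<ge> 2 \<Longrightarrow> 2 * dfac (p + 1) \<le> 15 * 10 ^ (p - 2) * fact p"
proof (induction p rule: nat_induct_at_least)
  case base then show ?case by (simp add: dfac_def eval_nat_numeral)
next
  case (Suc n)
  have a: "dfac (Suc n + 1) \<le> 10 * real (Suc n) * dfac (n + 1)"
    using less_imp_le[OF dfac_pos[of "n"]] Suc.hyps by (simp add: dfac_Suc) (intro mult_right_mono, auto)
  have "2 * dfac (Suc n + 1) \<le> 10 * real (Suc n) * (2 * dfac (n + 1))"
    using a by (simp add: distrib_left)
  also have "\<dots> \<le> 10 * real (Suc n) * (15 * 10 ^ (n - 2) * fact n)"
    using Suc.IH by (intro mult_left_mono) auto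
  also have "\<dots> = 15 * 10 ^ (Suc n - 2) * fact (Suc n)"
  proof -
    have pw: "Suc n - 2 = Suc (n - 2)" using Suc.hyps by simp
    show ?thesis unfolding pw by (simp add: algebra_simps)
  qed
  finally show ?case .
qed


lemma cont_bound_compact:
  fixes f :: "'x::topological_space \<Rightarrow> 'b::real_normed_vector"
  assumes "continuous_on UNIV f" "compact K"
  shows "\<exists>B. \<forall>x\<in>K. norm (f x) \<le> B"
proof -
  have "compact (f ` K)"
    by (rule compact_continuous_image[OF continuous_on_subset[OF assms(1)] assms(2)]) simp
  then show ?thesis using compact_imp_bounded bounded_iff by (metis image_eqI)
qed

locale bsetup = prob_space +
  fixes X :: "'a \<Rightarrow> real" and m D :: nat
  assumes Xm[measurable]: "X \<in> borel_measurable M"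
  and X01: "AE z in M. 0 \<le> X z \<and> X z \<le> 1"
  and mrec: "\<And>n. expectation (\<lambda>z. X z ^ Suc n) = (real m/2 + n)/(real m/2 + (real D - real m)/2 + n) * expectation (\<lambda>z. X z ^ n)"
  and m1: "1 \<le> m" and mD: "m \<le> D" and D2: "2 \<le> D"
begin

definition "q = real m / real D"

lemma q_pos: "q > 0" and q_le1: "q \<le> 1"
  using m1 mD D2 by (auto simp: q_def)

lemma intX:
  fixes f :: "real \<Rightarrow> real"
  assumes "continuous_on UNIV f"
  shows "integrable M (\<lambda>z. f (X z))"
proof -
  obtain B where B: "\<forall>x\<in>{0..1}. norm (f x) \<le> B"
    using cont_bound_compact[OF assms compact_Icc] by blast
  have fm: "f \<in> borel_measurable borel" by (rule borel_measurable_continuous_onI[OF assms])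
  show ?thesis
  proof (rule integrable_const_bound[where B=B])
    show "AE z in M. norm (f (X z)) \<le> B" using X01 by (rule AE_mp) (use B in auto)
    show "(\<lambda>z. f (X z)) \<in> borel_measurable M" using fm by measurable
  qed
qed

lemma mom_nonneg: "expectation (\<lambda>z. X z ^ n) \<ge> 0"
  by (rule integral_nonneg_AE) (use X01 in \<open>auto elim: AE_mp\<close>)

lemma mom_le: "expectation (\<lambda>z. X z ^ n) \<le> q ^ n * dfac n"
proof (induction n)
  case 0 then show ?case by (simp add: dfac_def prob_space)
next
  case (Suc n)
  have r: "(real m/2 + n)/(real m/2 + (real D - real m)/2 + n) \<le> q * (2 * real n + 1)"
  proof -
    have "real m/2 + (real D - real m)/2 + n = real D/2 + n" by (simp add: field_simps)
    then have "(real m/2 + n)/(real m/2 + (real D - real m)/2 + n) = (real m/2 + n) / (real D/2 + n)"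
      by simp
    also have "\<dots> \<le> (real m/2 + n) / (real D/2)"
      using D2 by (intro divide_left_mono) auto
    also have "\<dots> = (real m + 2*n) / real D" using D2 by (simp add: field_simps)
    also have "\<dots> \<le> q * (2 * real n + 1)"
    proof -
      have "real n \<le> real m * real n" using mult_right_mono[of 1 "real m" "real n"] m1 by simp
      then show ?thesis using m1 D2 by (simp add: q_def field_simps)
    qed
    finally show ?thesis .
  qed
  have "expectation (\<lambda>z. X z ^ Suc n) \<le> q * (2 * real n + 1) * expectation (\<lambda>z. X z ^ n)"
    unfolding mrec by (rule mult_right_mono[OF r mom_nonneg])
  also have "\<dots> \<le> q * (2 * real n + 1) * (q ^ n * dfac n)"
    using Suc.IH q_pos by (intro mult_left_mono) auto
  also have "\<dots> = q ^ Suc n * dfac (Suc n)" by (simp add: dfac_Suc)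
  finally show ?case .
qed

lemma mom_mono:
  assumes "n \<le> k" shows "expectation (\<lambda>z. X z ^ k) \<le> expectation (\<lambda>z. X z ^ n)"
proof (rule integral_mono_AE)
  show "AE z in M. X z ^ k \<le> X z ^ n" using X01 by (rule AE_mp) (auto intro!: power_decreasing assms)
qed (auto intro!: intX continuous_intros)

lemma I1:
  assumes p: "p \<ge> 2"
  shows "expectation (\<lambda>z. (X z ^ 2 - expectation (\<lambda>z. X z ^ 2)) ^ p)
          \<le> fact p / 2 * (28 * q) ^ (p - 2) * (1680 * q ^ 4)"
proof -
  define \<mu> where "\<mu> = expectation (\<lambda>z. X z ^ 2)"
  have \<mu>0: "\<mu> \<ge> 0" using mom_nonneg by (simp add: \<mu>_def)
  have \<mu>3: "\<mu> \<le> 3 * q^2" using mom_le[of 2] by (simp add: \<mu>_def dfac_2)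
  have pw: "(x^2 - \<mu>) ^ p \<le> x ^ (p + 2) + \<mu> ^ p" if "0 \<le> x" "x \<le> 1" for x
  proof -
    have "(x^2 - \<mu>) ^ p \<le> \<bar>x^2 - \<mu>\<bar> ^ p" by (metis abs_ge_self power_abs)
    also have "\<dots> \<le> (max (x^2) \<mu>) ^ p"
      using that \<mu>0 zero_le_power2[of x] by (intro power_mono) (auto simp: abs_if max_def)
    also have "\<dots> \<le> (x^2) ^ p + \<mu> ^ p" using that \<mu>0 by (auto simp: max_def)
    also have "(x^2)^p \<le> x ^ (p + 2)" 
      unfolding power_mult[symmetric] using that p by (intro power_decreasing) auto
    finally show ?thesis by simp
  qed
  have "expectation (\<lambda>z. (X z ^ 2 - \<mu>) ^ p) \<le> expectation (\<lambda>z. X z ^ (p + 2) + \<mu> ^ p)"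
  proof (rule integral_mono_AE)
    show "AE z in M. (X z ^ 2 - \<mu>) ^ p \<le> X z ^ (p + 2) + \<mu> ^ p" using X01 by (rule AE_mp) (rule AE_I2, blast intro: pw)
  qed (auto intro!: intX continuous_intros)
  also have "\<dots> = expectation (\<lambda>z. X z ^ (p + 2)) + \<mu> ^ p"
    by (subst Bochner_Integration.integral_add) (auto intro!: intX continuous_intros simp: prob_space)
  also have "\<dots> \<le> q ^ (p + 2) * dfac (p + 2) + 3 ^ p * q ^ (p + 2)"
  proof (rule add_mono[OF mom_le])
    have "\<mu> ^ p \<le> (3 * q^2) ^ p" by (rule power_mono[OF \<mu>3 \<mu>0])
    also have "\<dots> = 3 ^ p * q ^ (2 * p)" by (simp add: power_mult_distrib power_mult)
    also have "\<dots> \<le> 3 ^ p * q ^ (p + 2)" using q_pos q_le1 p by (intro mult_left_mono power_decreasing) auto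
    finally show "\<mu> ^ p \<le> 3 ^ p * q ^ (p + 2)" .
  qed
  also have "\<dots> = q ^ (p + 2) * (dfac (p + 2) + 3 ^ p)" by (simp add: algebra_simps)
  also have "\<dots> \<le> q ^ (p + 2) * (840 * 28 ^ (p - 2) * fact p)"
    using comb1[OF p] q_pos by (intro mult_left_mono) auto
  also have "\<dots> = fact p / 2 * (28 * q) ^ (p - 2) * (1680 * q ^ 4)"
  proof -
    have "q ^ (p + 2) = q ^ (p - 2) * q ^ 4" using p by (simp add: power_add[symmetric])
    then show ?thesis by (simp add: power_mult_distrib algebra_simps)
  qed
  finally show ?thesis by (simp add: \<mu>_def)
qed


lemma I2:
  assumes p: "p \<ge> 2"
  defines "c \<equiv> expectation (\<lambda>z. X z - X z ^ 2) / (real D - 1)"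
  shows "(expectation (\<lambda>z. (X z - X z ^ 2 - c) ^ p) - (- c) ^ p) / (real D - 1) + (- c) ^ p
          \<le> fact p / 2 * (12 * q) ^ (p - 2) * (48 * real m ^ 2 / real D ^ 3)"
proof -
  have D1: "real D - 1 \<ge> 1" using D2 by simp
  have Es0: "expectation (\<lambda>z. X z - X z ^ 2) \<ge> 0"
  proof (rule integral_nonneg_AE)
    show "AE z in M. 0 \<le> X z - X z ^ 2" using X01 by (rule AE_mp) (auto simp: power2_eq_square intro!: AE_I2 mult_left_le)
  qed
  have Esq: "expectation (\<lambda>z. X z - X z ^ 2) \<le> q"
  proof -
    have "expectation (\<lambda>z. X z - X z ^ 2) \<le> expectation (\<lambda>z. X z ^ 1)"
    proof (rule integral_mono_AE)
      show "AE z in M. X z - X z ^ 2 \<le> X z ^ 1" using X01 by (rule AE_mp) auto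
    qed (auto intro!: intX continuous_intros)
    also have "\<dots> \<le> q" using mom_le[of 1] by (simp add: dfac_def)
    finally show ?thesis .
  qed
  have c0: "c \<ge> 0" using Es0 D1 by (simp add: c_def)
  have cq: "c \<le> q / (real D - 1)" using Esq D1 by (simp add: c_def divide_right_mono)
  have cp: "c ^ p \<le> q ^ p / (real D - 1)"
  proof -
    have "c ^ p \<le> (q / (real D - 1)) ^ p" by (rule power_mono[OF cq c0])
    also have "\<dots> = q ^ p / (real D - 1) ^ p" by (simp add: power_divide)
    also have "\<dots> \<le> q ^ p / (real D - 1)"
    proof (rule divide_left_mono)
      show "real D - 1 \<le> (real D - 1) ^ p" using D1 p by (metis le_add_diff_inverse2 one_le_power power_increasing[of 1 p] power_one_right Suc_1 Suc_le_lessD less_imp_le_nat)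
    qed (use q_pos D1 in auto)
    finally show ?thesis .
  qed
  have pw: "(x - x^2 - c) ^ p \<le> x ^ p + c ^ p" if "0 \<le> x" "x \<le> 1" for x
  proof -
    have s0: "0 \<le> x - x^2" and sx: "x - x^2 \<le> x" using that by (auto simp: power2_eq_square intro: mult_left_le)
    have "(x - x^2 - c) ^ p \<le> \<bar>x - x^2 - c\<bar> ^ p" by (metis abs_ge_self power_abs)
    also have "\<dots> \<le> (max (x - x^2) c) ^ p" using s0 c0 by (intro power_mono) (auto simp: abs_if max_def)
    also have "\<dots> \<le> (x - x^2) ^ p + c ^ p" using s0 c0 by (auto simp: max_def)
    also have "(x - x^2) ^ p \<le> x ^ p" by (rule power_mono[OF sx s0])
    finally show ?thesis by simp
  qed
  have E1: "expectation (\<lambda>z. (X z - X z ^ 2 - c) ^ p) \<le> expectation (\<lambda>z. X z ^ p) + c ^ p"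
  proof -
    have "expectation (\<lambda>z. (X z - X z ^ 2 - c) ^ p) \<le> expectation (\<lambda>z. X z ^ p + c ^ p)"
    proof (rule integral_mono_AE)
      show "AE z in M. (X z - X z ^ 2 - c) ^ p \<le> X z ^ p + c ^ p" using X01 by (rule AE_mp) (rule AE_I2, blast intro: pw)
    qed (auto intro!: intX continuous_intros)
    also have "\<dots> = expectation (\<lambda>z. X z ^ p) + c ^ p"
      by (subst Bochner_Integration.integral_add) (auto intro!: intX continuous_intros simp: prob_space)
    finally show ?thesis .
  qed
  have T2: "(- c) ^ p * (1 - 1 / (real D - 1)) \<le> c ^ p"
  proof -
    have "(- c) ^ p * (1 - 1 / (real D - 1)) \<le> \<bar>(- c) ^ p\<bar> * (1 - 1 / (real D - 1))"
      by (rule mult_right_mono[OF abs_ge_self]) (use D1 in simp)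
    also have "\<dots> \<le> \<bar>(- c) ^ p\<bar> * 1" using D1 by (intro mult_left_mono) auto
    also have "\<dots> = c ^ p" using c0 by (simp add: power_abs)
    finally show ?thesis .
  qed
  have "(expectation (\<lambda>z. (X z - X z ^ 2 - c) ^ p) - (- c) ^ p) / (real D - 1) + (- c) ^ p
      = expectation (\<lambda>z. (X z - X z ^ 2 - c) ^ p) / (real D - 1) + (- c) ^ p * (1 - 1 / (real D - 1))"
    by (simp add: diff_divide_distrib algebra_simps)
  also have "\<dots> \<le> (expectation (\<lambda>z. X z ^ p) + c ^ p) / (real D - 1) + c ^ p"
    using E1 T2 D1 by (intro add_mono divide_right_mono) auto
  also have "\<dots> \<le> (q ^ p * dfac p + q ^ p / (real D - 1)) / (real D - 1) + q ^ p / (real D - 1)"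
    using mom_le[of p] cp D1 by (intro add_mono divide_right_mono) auto
  also have "\<dots> \<le> (q ^ p * dfac p + q ^ p) / (real D - 1) + q ^ p / (real D - 1)"
  proof -
    have "q ^ p / (real D - 1) \<le> q ^ p" using D1 q_pos by (simp add: divide_le_eq)
    then show ?thesis using D1 by (intro add_mono divide_right_mono) auto
  qed
  also have "\<dots> = q ^ p * (dfac p + 2) / (real D - 1)" by (simp add: add_divide_distrib[symmetric] algebra_simps)
  also have "\<dots> \<le> q ^ p * (dfac p + 2) * 2 / real D"
  proof -
    have "1 / (real D - 1) \<le> 2 / real D" using D2 by (simp add: field_simps)
    moreover have "q ^ p * (dfac p + 2) \<ge> 0" using q_pos dfac_pos[of p] by simp
    ultimately show ?thesis by (metis (no_types, lifting) mult_left_mono times_divide_eq_right mult.right_neutral)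
  qed
  also have "\<dots> \<le> q ^ p * (12 * 12 ^ (p - 2) * fact p) * 2 / real D"
    using comb2[OF p] q_pos D2 by (intro divide_right_mono mult_right_mono mult_left_mono) auto
  also have "\<dots> = fact p / 2 * (12 * q) ^ (p - 2) * (48 * real m ^ 2 / real D ^ 3)"
  proof -
    have "q ^ p = q ^ (p - 2) * q ^ 2" using p by (metis le_add_diff_inverse2 power_add)
    then show ?thesis using D2 by (simp add: power_mult_distrib q_def field_simps power2_eq_square power3_eq_cube)
  qed
  finally show ?thesis .
qed

lemma I3:
  assumes p: "p \<ge> 2"
  shows "expectation (\<lambda>z. (X z * sqrt (X z - X z ^ 2)) ^ p)
          \<le> fact p / 2 * (10 * q) ^ (p - 2) * (15 * real m ^ 3 / real D ^ 3)"
proof -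
  have pw: "(x * sqrt (x - x^2)) ^ p \<le> x ^ (p + 1)" if "0 \<le> x" "x \<le> 1" for x
  proof -
    have s0: "0 \<le> x - x^2" using that by (auto simp: power2_eq_square intro: mult_left_le)
    have "x - x^2 \<le> 1" using that zero_le_power2[of x] by linarith
    then have s1: "sqrt (x - x^2) \<le> 1" by simp
    define g where "g = x * sqrt (x - x^2)"
    have g0: "0 \<le> g" using that s0 by (simp add: g_def)
    have gx: "g \<le> x" using that s1 by (simp add: g_def mult_left_le)
    have g2: "g ^ 2 \<le> x ^ 3"
    proof -
      have "g ^ 2 = x^2 * (x - x^2)" using s0 by (simp add: g_def power_mult_distrib)
      also have "\<dots> \<le> x^2 * x" using that s0 by (intro mult_left_mono) auto
      finally show ?thesis by (simp add: power2_eq_square power3_eq_cube)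
    qed
    have "g ^ p = g ^ 2 * g ^ (p - 2)" using p by (metis le_add_diff_inverse power_add)
    also have "\<dots> \<le> x ^ 3 * x ^ (p - 2)"
      using g2 g0 gx by (intro mult_mono power_mono) auto
    also have "\<dots> = x ^ (p + 1)" using p by (simp add: power_add[symmetric])
    finally show ?thesis by (simp add: g_def)
  qed
  have "expectation (\<lambda>z. (X z * sqrt (X z - X z ^ 2)) ^ p) \<le> expectation (\<lambda>z. X z ^ (p + 1))"
  proof (rule integral_mono_AE)
    show "AE z in M. (X z * sqrt (X z - X z ^ 2)) ^ p \<le> X z ^ (p + 1)" using X01 by (rule AE_mp) (rule AE_I2, blast intro: pw)
  qed (auto intro!: intX continuous_intros)
  also have "\<dots> \<le> q ^ (p + 1) * dfac (p + 1)" by (rule mom_le)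
  also have "\<dots> \<le> q ^ (p + 1) * (15 * 10 ^ (p - 2) * fact p / 2)"
    using comb3[OF p] q_pos by (intro mult_left_mono) auto
  also have "\<dots> = fact p / 2 * (10 * q) ^ (p - 2) * (15 * real m ^ 3 / real D ^ 3)"
  proof -
    have "q ^ (p + 1) = q ^ (p - 2) * q ^ 3" using p by (simp add: power_add[symmetric])
    then show ?thesis using D2 by (simp add: power_mult_distrib q_def field_simps power3_eq_cube)
  qed
  finally show ?thesis .
qed

end


lemma outer_mult: "outer u v ** outer y z = (v \<bullet> y) *\<^sub>R outer u z"
  by (simp add: outer_def matrix_matrix_mult_def vec_eq_iff inner_vec_def sum_distrib_left sum_distrib_right algebra_simps)

lemma outer_mv: "outer u v *v y = (v \<bullet> y) *\<^sub>R u"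
  by (simp add: outer_def matrix_vector_mult_def vec_eq_iff inner_vec_def sum_distrib_left algebra_simps)

lemma inner_outer: "y \<bullet> (outer u v *v y) = (u \<bullet> y) * (v \<bullet> y)"
  by (simp add: outer_mv inner_commute)

lemma mm_outer_left: "A ** outer u v = outer (A *v u) (v::real^'k)"
  by (simp add: outer_def matrix_matrix_mult_def matrix_vector_mult_def vec_eq_iff sum_distrib_right sum_distrib_left algebra_simps)

lemma outer_mm_right: "outer u v ** (A::real^'n^'m) = outer u (transpose A *v v)"
  by (simp add: outer_def matrix_matrix_mult_def matrix_vector_mult_def transpose_def vec_eq_iff sum_distrib_left algebra_simps)

lemma W_outer: "W ** outer a a ** transpose W = outer (W *v a) (W *v a)"
  by (simp add: mm_outer_left outer_mm_right)

lemma outer_xW: "outer x a ** transpose W = outer x (W *v a)"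
  by (simp add: outer_mm_right)

lemma W_outerx: "W ** outer a x = outer (W *v a) x"
  by (simp add: mm_outer_left)

lemma mm_add_l: "((A::real^'n^'m) + B) ** C = A ** C + B ** C"
  by (simp add: matrix_matrix_mult_def vec_eq_iff sum.distrib algebra_simps)
lemma mm_add_r: "(A::real^'n^'m) ** (B + C) = A ** B + A ** C"
  by (simp add: matrix_matrix_mult_def vec_eq_iff sum.distrib algebra_simps)
lemma mm_diff_l: "((A::real^'n^'m) - B) ** C = A ** C - B ** C"
  by (simp add: matrix_matrix_mult_def vec_eq_iff sum_subtractf algebra_simps)
lemma mm_diff_r: "(A::real^'n^'m) ** (B - C) = A ** B - A ** C"
  by (simp add: matrix_matrix_mult_def vec_eq_iff sum_subtractf algebra_simps)
lemma mm_scale_l: "(c *\<^sub>R (A::real^'n^'m)) ** B = c *\<^sub>R (A ** B)"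
  by (simp add: matrix_matrix_mult_def vec_eq_iff sum_distrib_left algebra_simps)
lemma mm_scale_r: "(A::real^'n^'m) ** (c *\<^sub>R B) = c *\<^sub>R (A ** B)"
  by (simp add: matrix_matrix_mult_def vec_eq_iff sum_distrib_left algebra_simps)
lemma mv_scale: "(c *\<^sub>R (A::real^'n^'m)) *v v = c *\<^sub>R (A *v v)"
  by (simp add: matrix_vector_mult_def vec_eq_iff sum_distrib_left algebra_simps)
lemma mv_add: "((A::real^'n^'m) + B) *v v = A *v v + B *v v"
  by (simp add: matrix_vector_mult_def vec_eq_iff sum.distrib algebra_simps)
lemma mv_diff: "((A::real^'n^'m) - B) *v v = A *v v - B *v v"
  by (simp add: matrix_vector_mult_def vec_eq_iff sum_subtractf algebra_simps)

lemma matpow_scale: "matpow (c *\<^sub>R A) n = c ^ n *\<^sub>R matpow A n"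
  by (induction n) (simp_all add: mm_scale_l mm_scale_r)

lemma inner_Wv: "(W *v a) \<bullet> y = a \<bullet> (transpose W *v (y::real^'m))"
  by (simp add: matrix_vector_mult_def transpose_def inner_vec_def sum_distrib_left sum_distrib_right algebra_simps)
     (rule sum.swap)

lemma inner_WW:
  assumes "transpose W ** W = mat 1"
  shows "(W *v a) \<bullet> (W *v c) = a \<bullet> (c::real^'n)"
  by (simp only: inner_Wv matrix_vector_mul_assoc assms matrix_vector_mul_lid)

lemma norm_Wt:
  assumes "transpose W ** W = mat 1"
  shows "norm (transpose W *v v) \<le> norm (v::real^'m)"
proof -
  define u where "u = transpose W *v v"
  have "norm u ^ 2 = u \<bullet> u" by (simp add: power2_norm_eq_inner)
  also have "\<dots> = (W *v u) \<bullet> v" by (simp only: inner_Wv u_def)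
  also have "\<dots> \<le> norm (W *v u) * norm v" by (rule norm_cauchy_schwarz)
  also have "norm (W *v u) = norm u" using inner_WW[OF assms, of u u] by (simp add: norm_eq_sqrt_inner)
  finally have "norm u * norm u \<le> norm u * norm v" by (simp add: power2_eq_square)
  then show ?thesis unfolding u_def[symmetric]
    by (cases "norm u = 0") (auto simp: mult_le_cancel_left)
qed

lemma W_perp:
  fixes W :: "real^'e^'d"
  assumes "span (columns W) = {v. v \<bullet> x = 0}"
  shows "x \<bullet> (W *v a) = 0"
proof -
  have col: "column j W \<bullet> x = 0" for j
  proof -
    have "column j W \<in> span (columns W)" by (rule span_base) (auto simp: columns_def)
    then show ?thesis using assms by simp
  qed
  have "x \<bullet> (W *v a) = (\<Sum>j\<in>UNIV. a $ j * (column j W \<bullet> x))"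
    by (simp add: matrix_vector_mult_def column_def inner_vec_def sum_distrib_left sum_distrib_right algebra_simps)
       (rule sum.swap)
  also have "\<dots> = 0" by (simp add: col)
  finally show ?thesis .
qed

lemma cont_mm[continuous_intros]:
  fixes f :: "'x::topological_space \<Rightarrow> real^'n^'m" and g :: "'x \<Rightarrow> real^'k^'n"
  shows "continuous_on S f \<Longrightarrow> continuous_on S g \<Longrightarrow> continuous_on S (\<lambda>z. f z ** g z)"
  unfolding matrix_matrix_mult_def by (intro continuous_intros)

lemma cont_matpow[continuous_intros]:
  fixes f :: "'x::topological_space \<Rightarrow> real^'n^'n"
  shows "continuous_on S f \<Longrightarrow> continuous_on S (\<lambda>z. matpow (f z) n)"
  by (induction n) (auto intro!: continuous_intros)

lemma cont_outer[continuous_intros]: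
  fixes f :: "'x::topological_space \<Rightarrow> real^'n" and g :: "'x \<Rightarrow> real^'m"
  shows "continuous_on S f \<Longrightarrow> continuous_on S g \<Longrightarrow> continuous_on S (\<lambda>z. outer (f z) (g z))"
  unfolding outer_def by (intro continuous_intros)

lemma cont_transpose[continuous_intros]:
  fixes f :: "'x::topological_space \<Rightarrow> real^'n^'m"
  shows "continuous_on S f \<Longrightarrow> continuous_on S (\<lambda>z. transpose (f z))"
  unfolding transpose_def by (intro continuous_intros)

lemma cont_Ymat:
  "continuous_on UNIV (\<lambda>p. Ymat k (fst p) (snd p) W x - C)"
  unfolding Ymat_def
  by (cases "k = 1"; cases "k = 2") (simp_all; intro continuous_intros)+


locale msetup = prob_space +
  fixes w :: "'a \<Rightarrow> real" and al :: "'a \<Rightarrow> real^'e::finite"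
  assumes wm[measurable]: "w \<in> borel_measurable M" and alm[measurable]: "al \<in> borel_measurable M"
    and w01: "AE z in M. 0 \<le> w z \<and> w z \<le> 1"
    and ald: "distr M borel al = uniform_sphere"
    and hind: "\<forall>A\<in>sets (borel :: real measure). \<forall>B\<in>sets (borel :: (real^'e) measure).
         measure M (w -` A \<inter> al -` B \<inter> space M)
         = measure M (w -` A \<inter> space M) * measure M (al -` B \<inter> space M)"
begin

lemma aln: "AE z in M. norm (al z) = 1"
proof -
  have "AE a in distr M borel al. norm a = 1" unfolding ald by (rule sphere_AE_norm)
  then show ?thesis by (subst (asm) AE_distr_iff) auto
qed

lemma INT:
  fixes G :: "real \<Rightarrow> real^'e \<Rightarrow> 'b::{banach, second_countable_topology}"
  assumes c: "continuous_on UNIV (\<lambda>p. G (fst p) (snd p))"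
  shows "integrable M (\<lambda>z. G (w z) (al z))"
proof -
  have K: "compact ({0..1::real} \<times> cball (0::real^'e) 1)" by (intro compact_Times compact_Icc compact_cball)
  obtain B where B: "\<forall>p\<in>{0..1::real} \<times> cball (0::real^'e) 1. norm (G (fst p) (snd p)) \<le> B"
    using cont_bound_compact[OF c K] by blast
  show ?thesis
  proof (rule integrable_const_bound[where B=B])
    show "AE z in M. norm (G (w z) (al z)) \<le> B"
      using w01 aln by eventually_elim (use B in \<open>auto simp: mem_Times_iff\<close>)
    show "(\<lambda>z. G (w z) (al z)) \<in> borel_measurable M"
      by (rule borel_measurable_continuous_Pair[OF wm alm c])
  qed
qed

lemma EA:
  fixes h :: "real^'e \<Rightarrow> real"
  assumes "h \<in> borel_measurable borel"
  shows "expectation (\<lambda>z. h (al z)) = integral\<^sup>L uniform_sphere h"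
  using integral_distr[OF alm assms] by (simp add: ald)

lemma IND:
  fixes f :: "real \<Rightarrow> real" and h :: "real^'e \<Rightarrow> real"
  assumes f: "continuous_on UNIV f" and h: "continuous_on UNIV h"
  shows "expectation (\<lambda>z. f (w z) * h (al z)) = expectation (\<lambda>z. f (w z)) * expectation (\<lambda>z. h (al z))"
proof (rule indep_var_lebesgue_integral)
  show "indep_var borel (\<lambda>z. f (w z)) borel (\<lambda>z. h (al z))"
    by (rule indep_from_hyp[OF wm alm borel_measurable_continuous_onI[OF f] borel_measurable_continuous_onI[OF h] hind])
  show "integrable M (\<lambda>z. f (w z))"
  proof -
    have "continuous_on UNIV (\<lambda>p::real \<times> (real^'e). f (fst p))"
      by (rule continuous_on_compose2[OF f]) (auto intro: continuous_intros)
    then show ?thesis using INT[of "\<lambda>a b. f a"] by simp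
  qed
  show "integrable M (\<lambda>z. h (al z))"
  proof -
    have "continuous_on UNIV (\<lambda>p::real \<times> (real^'e). h (snd p))"
      by (rule continuous_on_compose2[OF h]) (auto intro: continuous_intros)
    then show ?thesis using INT[of "\<lambda>a b. h b"] by simp
  qed
qed

lemma IND1:
  fixes f :: "real \<Rightarrow> real"
  assumes f: "continuous_on UNIV f"
  shows "expectation (\<lambda>z. f (w z) * (al z \<bullet> u)) = 0"
proof -
  have "expectation (\<lambda>z. f (w z) * (al z \<bullet> u)) = expectation (\<lambda>z. f (w z)) * expectation (\<lambda>z. al z \<bullet> u)"
    by (rule IND[OF f]) (intro continuous_intros)
  also have "expectation (\<lambda>z. al z \<bullet> u) = 0"
    by (subst EA) (auto simp: sphere_inner_mean)
  finally show ?thesis by simp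
qed

lemma IND2:
  fixes f :: "real \<Rightarrow> real"
  assumes f: "continuous_on UNIV f"
  shows "expectation (\<lambda>z. f (w z) * ((al z \<bullet> u) * (al z \<bullet> u'))) = expectation (\<lambda>z. f (w z)) * ((u \<bullet> u') / CARD('e))"
proof -
  have "expectation (\<lambda>z. f (w z) * ((al z \<bullet> u) * (al z \<bullet> u'))) = expectation (\<lambda>z. f (w z)) * expectation (\<lambda>z. (al z \<bullet> u) * (al z \<bullet> u'))"
    by (rule IND[OF f, of "\<lambda>a. (a \<bullet> u) * (a \<bullet> u')"]) (intro continuous_intros)
  also have "expectation (\<lambda>z. (al z \<bullet> u) * (al z \<bullet> u')) = (u \<bullet> u') / CARD('e)"
    by (subst EA[of "\<lambda>a. (a \<bullet> u) * (a \<bullet> u')"]) (auto simp: sphere_inner2)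
  finally show ?thesis .
qed

lemma E_comp:
  fixes F :: "'a \<Rightarrow> real^'n^'m"
  assumes "integrable M F"
  shows "expectation F $ i $ j = expectation (\<lambda>z. F z $ i $ j)"
proof -
  have "expectation F $ i = expectation (\<lambda>z. F z $ i)"
    by (rule integral_bounded_linear[OF bounded_linear_vec_nth assms, symmetric])
  also have "\<dots> $ j = expectation (\<lambda>z. F z $ i $ j)"
    by (rule integral_bounded_linear[OF bounded_linear_vec_nth, symmetric])
       (rule integrable_bounded_linear[OF bounded_linear_vec_nth assms])
  finally show ?thesis .
qed

lemma E_quad:
  fixes F :: "'a \<Rightarrow> real^'n^'n"
  assumes "integrable M F"
  shows "v \<bullet> (expectation F *v v) = expectation (\<lambda>z. v \<bullet> (F z *v v))"
proof -
  have lin: "linear (\<lambda>A::real^'n^'n. v \<bullet> (A *v v))"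
    by (rule linearI) (simp_all add: mv_add mv_scale inner_add_right)
  have bl: "bounded_linear (\<lambda>A::real^'n^'n. v \<bullet> (A *v v))"
    using lin linear_conv_bounded_linear by blast
  show ?thesis by (rule integral_bounded_linear[OF bl assms, symmetric])
qed

end


lemma loewnerI: "(\<And>v. v \<bullet> (A *v v) \<le> v \<bullet> (B *v v)) \<Longrightarrow> loewner_le A B"
  unfolding loewner_le_def by (simp add: mv_diff inner_diff_right)

lemma matpow_outer: "n \<ge> 1 \<Longrightarrow> matpow (outer x x) n = (norm x ^ 2) ^ (n - 1) *\<^sub>R outer x x"
proof (induction n rule: nat_induct_at_least)
  case base then show ?case by simp
next
  case (Suc n)
  have "matpow (outer x x) (Suc n) = outer x x ** ((norm x ^ 2) ^ (n - 1) *\<^sub>R outer x x)"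
    by (simp add: Suc.IH)
  also have "\<dots> = (norm x ^ 2) ^ n *\<^sub>R outer x x"
  proof -
    obtain k where k: "n = Suc k" using Suc.hyps by (cases n) auto
    show ?thesis by (simp add: k mm_scale_r outer_mult power2_norm_eq_inner power_Suc2)
  qed
  finally show ?case by simp
qed

lemma quad_scale_outer: "v \<bullet> ((a *\<^sub>R outer x x) *v v) = a * (x \<bullet> v)^2"
  by (simp add: mv_scale inner_outer power2_eq_square)

lemma pow_le_Xn:
  fixes r Xn :: real
  assumes "0 \<le> r" "r \<le> Xn" "p \<ge> 2"
  shows "(r^2) ^ (p - 1) = r^2 * (r^2)^(p-2)" and "(r^2)^(p-2) \<le> (Xn^2)^(p-2)"
proof -
  show "(r^2) ^ (p - 1) = r^2 * (r^2)^(p-2)" using assms(3)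
    by (metis Suc_diff_Suc Suc_1 Suc_le_lessD power_Suc)
  show "(r^2)^(p-2) \<le> (Xn^2)^(p-2)" by (rule power_mono[OF power_mono[OF assms(2) assms(1)] zero_le_power2])
qed

context msetup begin

lemma case1:
  fixes W :: "real^'e^'d" and x :: "real^'d" and md Dd Xn :: real
  assumes p: "p \<ge> 2" and Xn: "norm x \<le> Xn" and qpos: "md / Dd > 0"
    and I1: "expectation (\<lambda>z. (w z ^ 2 - expectation (\<lambda>z. w z ^ 2)) ^ p)
          \<le> fact p / 2 * (28 * (md / Dd)) ^ (p - 2) * (1680 * (md / Dd) ^ 4)"
  shows "loewner_le
     (expectation (\<lambda>z. matpow
        (Ymat 1 (w z) (al z) W x
         - expectation (\<lambda>z'. Ymat 1 (w z') (al z') W x)) p))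
     ((fact p / 2 * Rk 1 md Dd Xn ^ (p - 2)) *\<^sub>R Asq 1 md Dd x)"
proof -
  define Ox where "Ox = outer x x"
  define \<mu> where "\<mu> = expectation (\<lambda>z. w z ^ 2)"
  define r where "r = norm x"
  define E1 where "E1 = expectation (\<lambda>z. (w z ^ 2 - \<mu>) ^ p)"
  define q where "q = md / Dd"
  have intw: "integrable M (\<lambda>z. f (w z))" if "continuous_on UNIV f" for f :: "real \<Rightarrow> real"
  proof -
    have "continuous_on UNIV (\<lambda>p::real \<times> (real^'e). f (fst p))"
      by (rule continuous_on_compose2[OF that]) (auto intro: continuous_intros)
    then show ?thesis using INT[of "\<lambda>a b. f a"] by simp
  qed
  have Y: "Ymat 1 (w z) (al z) W x = (w z ^ 2) *\<^sub>R Ox" for z by (simp add: Ymat_def Ox_def)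
  have EY: "expectation (\<lambda>z. Ymat 1 (w z) (al z) W x) = \<mu> *\<^sub>R Ox"
    unfolding Y \<mu>_def by (rule integral_scaleR_left) (rule intw, intro continuous_intros)
  have Phi: "matpow (Ymat 1 (w z) (al z) W x - \<mu> *\<^sub>R Ox) p = ((w z ^ 2 - \<mu>) ^ p * (r^2) ^ (p - 1)) *\<^sub>R Ox" for z
    unfolding Y using p by (simp add: scaleR_diff_left[symmetric] matpow_scale matpow_outer Ox_def r_def)
  have EPhi: "expectation (\<lambda>z. matpow (Ymat 1 (w z) (al z) W x - \<mu> *\<^sub>R Ox) p) = (E1 * (r^2) ^ (p - 1)) *\<^sub>R Ox"
    unfolding Phi E1_def
    by (subst integral_scaleR_left) (auto intro!: intw continuous_intros)
  have RHS: "(fact p / 2 * Rk 1 md Dd Xn ^ (p - 2)) *\<^sub>R Asq 1 md Dd x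
       = (fact p / 2 * (28 * q * Xn^2) ^ (p - 2) * (1680 * q ^ 4) * r^2) *\<^sub>R Ox"
    by (simp add: Rk_def Asq_def S1_def Ox_def r_def q_def power_divide)
  have E1b: "E1 \<le> fact p / 2 * (28 * q) ^ (p - 2) * (1680 * q ^ 4)"
    using I1 by (simp add: E1_def \<mu>_def q_def)
  have r0: "0 \<le> r" by (simp add: r_def)
  have q0: "q > 0" using qpos by (simp add: q_def)
  have coef: "E1 * (r^2) ^ (p - 1) \<le> fact p / 2 * (28 * q * Xn^2) ^ (p - 2) * (1680 * q ^ 4) * r^2"
  proof (cases "E1 \<le> 0")
    case True
    then have "E1 * (r^2) ^ (p - 1) \<le> 0" by (simp add: mult_nonpos_nonneg)
    also have "0 \<le> fact p / 2 * (28 * q * Xn^2) ^ (p - 2) * (1680 * q ^ 4) * r^2"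
      using q0 by simp
    finally show ?thesis .
  next
    case False
    have "E1 * (r^2) ^ (p - 1) = E1 * (r^2)^(p-2) * r^2"
      using pow_le_Xn(1)[OF r0 Xn[folded r_def] p] by simp
    also have "\<dots> \<le> (fact p / 2 * (28 * q) ^ (p - 2) * (1680 * q ^ 4)) * (Xn^2)^(p-2) * r^2"
      using False E1b pow_le_Xn(2)[OF r0 Xn[folded r_def] p]
      by (intro mult_right_mono mult_mono) auto
    also have "\<dots> = fact p / 2 * (28 * q * Xn^2) ^ (p - 2) * (1680 * q ^ 4) * r^2"
      by (simp add: power_mult_distrib)
    finally show ?thesis .
  qed
  show ?thesis
    unfolding EY EPhi RHS
  proof (rule loewnerI)
    fix v :: "real^'d"
    show "v \<bullet> ((E1 * (r\<^sup>2) ^ (p - 1)) *\<^sub>R Ox *v v) \<le> v \<bullet> ((fact p / 2 * (28 * q * Xn\<^sup>2) ^ (p - 2) * (1680 * q ^ 4) * r\<^sup>2) *\<^sub>R Ox *v v)"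
      unfolding Ox_def quad_scale_outer by (rule mult_right_mono[OF coef]) simp
  qed
qed

end


lemma cont_mv[continuous_intros]:
  fixes f :: "'x::topological_space \<Rightarrow> real^'n^'m"
  shows "continuous_on S f \<Longrightarrow> continuous_on S (\<lambda>z. f z *v v)"
  unfolding matrix_vector_mult_def by (intro continuous_intros)

lemma matpow_PQ:
  fixes P Q :: "real^'n^'n"
  assumes PP: "P ** P = P" and PQ: "P ** Q = P" and QP: "Q ** P = P" and QQ: "Q ** Q = Q" and n: "n \<ge> 1"
  shows "matpow (s *\<^sub>R P - c *\<^sub>R Q) n = ((s - c)^n - (-c)^n) *\<^sub>R P + (-c)^n *\<^sub>R Q"
  using n
proof (induction n rule: nat_induct_at_least)
  case base then show ?case by (simp add: algebra_simps)
next
  case (Suc n)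
  define a where "a = (s - c)^n - (-c)^n"
  define b where "b = (-c)^n"
  have "matpow (s *\<^sub>R P - c *\<^sub>R Q) (Suc n) = (s *\<^sub>R P - c *\<^sub>R Q) ** (a *\<^sub>R P + b *\<^sub>R Q)"
    by (simp add: Suc.IH a_def b_def)
  also have "\<dots> = (s * a) *\<^sub>R P + (s * b) *\<^sub>R P - ((c * a) *\<^sub>R P + (c * b) *\<^sub>R Q)"
    by (simp add: mm_add_l mm_add_r mm_diff_l mm_diff_r mm_scale_l mm_scale_r PP PQ QP QQ) (simp add: algebra_simps)
  also have "\<dots> = (s * a + s * b - c * a) *\<^sub>R P + (- (c * b)) *\<^sub>R Q"
    by (simp add: algebra_simps)
  also have "s * a + s * b - c * a = (s - c)^Suc n - (-c)^Suc n"
    by (simp add: a_def b_def algebra_simps)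
  also have "- (c * b) = (-c) ^ Suc n" by (simp add: b_def)
  finally show ?case .
qed

lemma Q_props:
  fixes W :: "real^'e^'d"
  assumes WW: "transpose W ** W = mat 1"
  shows "(W ** transpose W) *v (W *v a) = W *v a"
    and "(W ** transpose W) ** (W ** transpose W) = W ** transpose W"
    and "transpose (W ** transpose W) = W ** transpose W"
proof -
  show "(W ** transpose W) *v (W *v a) = W *v a"
    by (simp only: matrix_vector_mul_assoc matrix_mul_assoc[symmetric] WW matrix_mul_rid)
  have "(W ** transpose W) ** (W ** transpose W) = W ** (transpose W ** W) ** transpose W"
    by (simp only: matrix_mul_assoc)
  then show "(W ** transpose W) ** (W ** transpose W) = W ** transpose W"
    by (simp add: WW)
  show "transpose (W ** transpose W) = W ** transpose W"
    by (simp add: matrix_transpose_mul)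
qed

lemma quadQ:
  fixes W :: "real^'e^'d"
  shows "v \<bullet> ((W ** transpose W) *v v) = (transpose W *v v) \<bullet> (transpose W *v v)"
proof -
  have "v \<bullet> ((W ** transpose W) *v v) = (W *v (transpose W *v v)) \<bullet> v"
    by (simp only: matrix_vector_mul_assoc inner_commute)
  also have "\<dots> = (transpose W *v v) \<bullet> (transpose W *v v)" by (simp only: inner_Wv)
  finally show ?thesis .
qed

context msetup begin

lemma case2:
  fixes W :: "real^'e^'d" and x :: "real^'d" and md Dd Xn :: real
  assumes p: "p \<ge> 2" and Xn: "norm x \<le> Xn" and qpos: "md / Dd > 0"
    and Dd: "real CARD('e) = Dd - 1" and WW: "transpose W ** W = mat 1"
    and I2: "(expectation (\<lambda>z. (w z - w z ^ 2 - expectation (\<lambda>z. w z - w z ^ 2) / (Dd - 1)) ^ p)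
               - (- (expectation (\<lambda>z. w z - w z ^ 2) / (Dd - 1))) ^ p) / (Dd - 1)
             + (- (expectation (\<lambda>z. w z - w z ^ 2) / (Dd - 1))) ^ p
          \<le> fact p / 2 * (12 * (md / Dd)) ^ (p - 2) * (48 * md ^ 2 / Dd ^ 3)"
  shows "loewner_le
     (expectation (\<lambda>z. matpow
        (Ymat 2 (w z) (al z) W x
         - expectation (\<lambda>z'. Ymat 2 (w z') (al z') W x)) p))
     ((fact p / 2 * Rk 2 md Dd Xn ^ (p - 2)) *\<^sub>R Asq 2 md Dd x)"
proof -
  define r where "r = norm x"
  define Q where "Q = W ** transpose W"
  define Es where "Es = expectation (\<lambda>z. w z - w z ^ 2)"
  define c where "c = Es / (Dd - 1)"
  define q where "q = md / Dd"
  have D1: "Dd - 1 > 0" using Dd by (metis of_nat_0_less_iff zero_less_card_finite)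
  have intw: "integrable M (\<lambda>z. f (w z))" if "continuous_on UNIV f" for f :: "real \<Rightarrow> real"
  proof -
    have "continuous_on UNIV (\<lambda>p::real \<times> (real^'e). f (fst p))"
      by (rule continuous_on_compose2[OF that]) (auto intro: continuous_intros)
    then show ?thesis using INT[of "\<lambda>a b. f a"] by simp
  qed
  have Y: "Ymat 2 (w z) (al z) W x = ((w z - w z ^ 2) * r ^ 2) *\<^sub>R outer (W *v al z) (W *v al z)" for z
    by (simp add: Ymat_def W_outer r_def)
  have intY: "integrable M (\<lambda>z. Ymat 2 (w z) (al z) W x)"
    using INT[of "\<lambda>a b. Ymat 2 a b W x - 0"] cont_Ymat[of 2 W x 0] by simp
  have EY: "expectation (\<lambda>z. Ymat 2 (w z) (al z) W x) = (r ^ 2 * c) *\<^sub>R Q"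
  proof (subst vec_eq_iff, intro allI, subst vec_eq_iff, intro allI)
    fix i j
    have "expectation (\<lambda>z. Ymat 2 (w z) (al z) W x) $ i $ j = expectation (\<lambda>z. Ymat 2 (w z) (al z) W x $ i $ j)"
      by (rule E_comp[OF intY])
    also have "\<dots> = expectation (\<lambda>z. ((w z - w z ^ 2) * r ^ 2) * ((al z \<bullet> W $ i) * (al z \<bullet> W $ j)))"
      by (simp add: Y outer_def matrix_vector_mul_component inner_commute)
    also have "\<dots> = expectation (\<lambda>z. (w z - w z ^ 2) * r ^ 2) * ((W $ i \<bullet> W $ j) / CARD('e))"
      by (rule IND2) (intro continuous_intros)
    also have "expectation (\<lambda>z. (w z - w z ^ 2) * r ^ 2) = Es * r^2"
      by (simp add: Es_def)
    also have "W $ i \<bullet> W $ j = Q $ i $ j"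
      by (simp add: Q_def matrix_matrix_mult_def transpose_def inner_vec_def)
    finally show "expectation (\<lambda>z. Ymat 2 (w z) (al z) W x) $ i $ j = ((r ^ 2 * c) *\<^sub>R Q) $ i $ j"
      by (simp add: c_def Dd)
  qed
  define G where "G = (\<lambda>v a b. v \<bullet> (matpow (Ymat 2 a b W x - (r ^ 2 * c) *\<^sub>R Q) p *v v))"
  have intPhi: "integrable M (\<lambda>z. matpow (Ymat 2 (w z) (al z) W x - (r ^ 2 * c) *\<^sub>R Q) p)"
    by (rule INT[of "\<lambda>a b. matpow (Ymat 2 a b W x - (r ^ 2 * c) *\<^sub>R Q) p"])
       (intro continuous_intros cont_Ymat)
  show ?thesis
    unfolding EY
  proof (rule loewnerI)
    fix v :: "real^'d"
    define u where "u = transpose W *v v"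
    define K where "K = 48 * md ^ 2 / Dd ^ 3"
    define \<kappa> where "\<kappa> = (expectation (\<lambda>z. (w z - w z ^ 2 - c) ^ p) - (- c) ^ p) / (Dd - 1) + (- c) ^ p"
    have pw: "v \<bullet> (matpow (Ymat 2 (w z) (al z) W x - (r ^ 2 * c) *\<^sub>R Q) p *v v)
       = (r^2)^p * ((((w z - w z ^ 2) - c)^p - (-c)^p) * ((al z \<bullet> u) * (al z \<bullet> u)) + (-c)^p * (u \<bullet> u))"
      if n1: "norm (al z) = 1" for z
    proof -
      define P where "P = outer (W *v al z) (W *v al z)"
      have bb: "(W *v al z) \<bullet> (W *v al z) = 1" using n1 inner_WW[OF WW] by (simp add: norm_eq_sqrt_inner)
      have PP: "P ** P = P" by (simp add: P_def outer_mult bb)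
      have QP: "Q ** P = P" by (simp add: P_def Q_def mm_outer_left Q_props[OF WW])
      have PQ: "P ** Q = P" by (simp add: P_def Q_def outer_mm_right Q_props[OF WW])
      have QQ: "Q ** Q = Q" by (simp add: Q_def Q_props[OF WW])
      have "Ymat 2 (w z) (al z) W x - (r ^ 2 * c) *\<^sub>R Q = r^2 *\<^sub>R ((w z - w z ^ 2) *\<^sub>R P - c *\<^sub>R Q)"
        by (simp add: Y P_def algebra_simps)
      then have "matpow (Ymat 2 (w z) (al z) W x - (r ^ 2 * c) *\<^sub>R Q) p
          = (r^2)^p *\<^sub>R ((((w z - w z ^ 2) - c)^p - (-c)^p) *\<^sub>R P + (-c)^p *\<^sub>R Q)"
        using p by (simp add: matpow_scale matpow_PQ[OF PP PQ QP QQ])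
      moreover have "v \<bullet> (P *v v) = (al z \<bullet> u) * (al z \<bullet> u)"
        by (simp add: P_def inner_outer inner_Wv u_def)
      moreover have "v \<bullet> (Q *v v) = u \<bullet> u" by (simp only: Q_def quadQ u_def)
      ultimately show ?thesis by (simp add: mv_scale mv_add inner_add_right)
    qed
    have "v \<bullet> (expectation (\<lambda>z. matpow (Ymat 2 (w z) (al z) W x - (r ^ 2 * c) *\<^sub>R Q) p) *v v)
       = expectation (\<lambda>z. v \<bullet> (matpow (Ymat 2 (w z) (al z) W x - (r ^ 2 * c) *\<^sub>R Q) p *v v))"
      by (rule E_quad[OF intPhi])
    also have "\<dots> = expectation (\<lambda>z. (r^2)^p * ((((w z - w z ^ 2) - c)^p - (-c)^p) * ((al z \<bullet> u) * (al z \<bullet> u)) + (-c)^p * (u \<bullet> u)))"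
    proof (rule integral_cong_AE)
      show "AE z in M. v \<bullet> (matpow (Ymat 2 (w z) (al z) W x - (r ^ 2 * c) *\<^sub>R Q) p *v v)
         = (r^2)^p * ((((w z - w z ^ 2) - c)^p - (-c)^p) * ((al z \<bullet> u) * (al z \<bullet> u)) + (-c)^p * (u \<bullet> u))"
        using aln by (rule AE_mp) (rule AE_I2, blast intro: pw)
      show "(\<lambda>z. v \<bullet> (matpow (Ymat 2 (w z) (al z) W x - (r ^ 2 * c) *\<^sub>R Q) p *v v)) \<in> borel_measurable M"
      proof -
        have "continuous_on UNIV (\<lambda>y. v \<bullet> (matpow (Ymat 2 (fst y) (snd y) W x - (r ^ 2 * c) *\<^sub>R Q) p *v v))"
          by (intro continuous_intros cont_Ymat)
        then show ?thesis
          using borel_measurable_continuous_Pair[OF wm alm, of "\<lambda>a b. v \<bullet> (matpow (Ymat 2 a b W x - (r ^ 2 * c) *\<^sub>R Q) p *v v)"]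
          by simp
      qed
    qed measurable
    also have "\<dots> = (r^2)^p * (expectation (\<lambda>z. (((w z - w z ^ 2) - c)^p - (-c)^p) * ((al z \<bullet> u) * (al z \<bullet> u))) + (-c)^p * (u \<bullet> u))"
    proof -
      have iF: "integrable M (\<lambda>z. (((w z - w z ^ 2) - c)^p - (-c)^p) * ((al z \<bullet> u) * (al z \<bullet> u)))"
        using INT[of "\<lambda>a b. (((a - a ^ 2) - c)^p - (-c)^p) * ((b \<bullet> u) * (b \<bullet> u))"]
        by (simp add: continuous_intros)
      show ?thesis
        by (subst integral_mult_right_zero, subst Bochner_Integration.integral_add) (use iF in \<open>simp_all add: prob_space\<close>)
    qed
    also have "\<dots> = (r^2)^p * (u \<bullet> u) * \<kappa>"
    proof -
      have "expectation (\<lambda>z. (((w z - w z ^ 2) - c)^p - (-c)^p) * ((al z \<bullet> u) * (al z \<bullet> u)))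
          = expectation (\<lambda>z. ((w z - w z ^ 2) - c)^p - (-c)^p) * ((u \<bullet> u) / CARD('e))"
        by (rule IND2[of "\<lambda>y. ((y - y ^ 2) - c)^p - (-c)^p"]) (intro continuous_intros)
      also have "expectation (\<lambda>z. ((w z - w z ^ 2) - c)^p - (-c)^p) = expectation (\<lambda>z. ((w z - w z ^ 2) - c)^p) - (-c)^p"
        by (subst Bochner_Integration.integral_diff) (auto intro!: intw continuous_intros simp: prob_space)
      finally have eqF: "expectation (\<lambda>z. (((w z - w z ^ 2) - c)^p - (-c)^p) * ((al z \<bullet> u) * (al z \<bullet> u)))
          = (expectation (\<lambda>z. ((w z - w z ^ 2) - c)^p) - (-c)^p) * ((u \<bullet> u) / (Dd - 1))"
        by (simp only: Dd)
      show ?thesis unfolding eqF \<kappa>_def using D1 by (simp add: field_simps)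
    qed
    also have "\<dots> \<le> v \<bullet> (((fact p / 2 * Rk 2 md Dd Xn ^ (p - 2)) *\<^sub>R Asq 2 md Dd x) *v v)"
    proof -
      have rhs: "v \<bullet> (((fact p / 2 * Rk 2 md Dd Xn ^ (p - 2)) *\<^sub>R Asq 2 md Dd x) *v v)
          = (fact p / 2 * (12 * q * Xn^2) ^ (p - 2)) * K * (r^2)^2 * (v \<bullet> v)"
        by (simp add: Asq_def S2_def Rk_def mv_scale q_def K_def r_def)
      have kb: "\<kappa> \<le> fact p / 2 * (12 * q) ^ (p - 2) * K"
        using I2 by (simp add: \<kappa>_def c_def Es_def q_def K_def)
      have uv: "u \<bullet> u \<le> v \<bullet> v"
        using norm_Wt[OF WW, of v] by (simp add: u_def norm_eq_sqrt_inner)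
      have u0: "0 \<le> u \<bullet> u" by simp
      have r0: "0 \<le> r" by (simp add: r_def)
      have rp: "(r^2)^p = (r^2)^2 * (r^2)^(p-2)" using p by (metis le_add_diff_inverse power_add)
      have q0: "q > 0" using qpos by (simp add: q_def)
      have K0: "K \<ge> 0" using D1 by (simp add: K_def)
      show ?thesis
      proof (cases "\<kappa> \<le> 0")
        case True
        then have "(r^2)^p * (u \<bullet> u) * \<kappa> \<le> 0" by (simp add: mult_nonneg_nonpos)
        also have "0 \<le> v \<bullet> (((fact p / 2 * Rk 2 md Dd Xn ^ (p - 2)) *\<^sub>R Asq 2 md Dd x) *v v)"
          unfolding rhs using q0 K0 by simp
        finally show ?thesis .
      next
        case False
        have "(r^2)^p * (u \<bullet> u) * \<kappa> = (r^2)^2 * (r^2)^(p-2) * (u \<bullet> u) * \<kappa>" by (simp add: rp)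
        also have "\<dots> \<le> (r^2)^2 * (Xn^2)^(p-2) * (v \<bullet> v) * (fact p / 2 * (12 * q) ^ (p - 2) * K)"
          using False kb uv u0 pow_le_Xn(2)[OF r0 Xn[folded r_def] p]
          by (intro mult_mono mult_left_mono) auto
        also have "\<dots> = v \<bullet> (((fact p / 2 * Rk 2 md Dd Xn ^ (p - 2)) *\<^sub>R Asq 2 md Dd x) *v v)"
          unfolding rhs by (simp add: power_mult_distrib)
        finally show ?thesis .
      qed
    qed
    finally show "v \<bullet> (expectation (\<lambda>z. matpow (Ymat 2 (w z) (al z) W x - (r ^ 2 * c) *\<^sub>R Q) p) *v v)
        \<le> v \<bullet> (((fact p / 2 * Rk 2 md Dd Xn ^ (p - 2)) *\<^sub>R Asq 2 md Dd x) *v v)" .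
  qed
qed

end


lemma matpow_N:
  fixes N E2 :: "real^'n^'n"
  assumes NN: "N ** N = E2" and NE: "N ** E2 = \<rho> *\<^sub>R N"
  shows "matpow N (2 * j + 1) = \<rho> ^ j *\<^sub>R N"
proof (induction j)
  case 0 then show ?case by simp
next
  case (Suc j)
  have "2 * Suc j + 1 = Suc (Suc (2 * j + 1))" by simp
  then have "matpow N (2 * Suc j + 1) = N ** (N ** matpow N (2 * j + 1))" by (simp only: matpow.simps)
  also have "\<dots> = \<rho> ^ j *\<^sub>R (N ** (N ** N))" by (simp only: Suc.IH mm_scale_r)
  also have "\<dots> = \<rho> ^ Suc j *\<^sub>R N" by (simp only: NN NE scaleR_scaleR power_Suc mult.commute)
  finally show ?case .
qed

lemma matpow_N_even:
  fixes N E2 :: "real^'n^'n"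
  assumes NN: "N ** N = E2" and NE: "N ** E2 = \<rho> *\<^sub>R N" and j: "j \<ge> 1"
  shows "matpow N (2 * j) = \<rho> ^ (j - 1) *\<^sub>R E2"
proof -
  obtain i where i: "j = Suc i" using j by (cases j) auto
  have "2 * j = Suc (2 * i + 1)" by (simp add: i)
  then have "matpow N (2 * j) = N ** matpow N (2 * i + 1)" by (simp only: matpow.simps)
  also have "\<dots> = N ** (\<rho> ^ i *\<^sub>R N)" by (simp only: matpow_N[OF NN NE])
  also have "\<dots> = \<rho> ^ i *\<^sub>R E2" by (simp only: mm_scale_r NN)
  finally show ?thesis by (simp add: i)
qed

context msetup begin

lemma case3:
  fixes W :: "real^'e^'d" and x :: "real^'d" and md Dd Xn :: real
  assumes p: "p \<ge> 2" and Xn: "norm x \<le> Xn" and qpos: "md / Dd > 0"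
    and Dd: "real CARD('e) = Dd - 1" and WW: "transpose W ** W = mat 1"
    and Wp: "\<And>a. x \<bullet> (W *v a) = 0"
    and I3: "expectation (\<lambda>z. (w z * sqrt (w z - w z ^ 2)) ^ p)
          \<le> fact p / 2 * (10 * (md / Dd)) ^ (p - 2) * (15 * md ^ 3 / Dd ^ 3)"
  shows "loewner_le
     (expectation (\<lambda>z. matpow
        (Ymat 3 (w z) (al z) W x
         - expectation (\<lambda>z'. Ymat 3 (w z') (al z') W x)) p))
     ((fact p / 2 * Rk 3 md Dd Xn ^ (p - 2)) *\<^sub>R Asq 3 md Dd x)"
proof -
  define r where "r = norm x"
  define q where "q = md / Dd"
  define g where "g = (\<lambda>y::real. y * sqrt (y - y ^ 2))"
  have c1: "real CARD('e) \<ge> 1" using zero_less_card_finite[where 'a='e] by linarith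
  have D1: "Dd - 1 \<ge> 1" using c1 Dd by simp
  have intw: "integrable M (\<lambda>z. f (w z))" if "continuous_on UNIV f" for f :: "real \<Rightarrow> real"
  proof -
    have "continuous_on UNIV (\<lambda>p::real \<times> (real^'e). f (fst p))"
      by (rule continuous_on_compose2[OF that]) (auto intro: continuous_intros)
    then show ?thesis using INT[of "\<lambda>a b. f a"] by simp
  qed
  have Y: "Ymat 3 (w z) (al z) W x = (g (w z) * r) *\<^sub>R (outer x (W *v al z) + outer (W *v al z) x)" for z
    by (simp add: Ymat_def outer_xW W_outerx r_def g_def)
  have intY: "integrable M (\<lambda>z. Ymat 3 (w z) (al z) W x)"
    using INT[of "\<lambda>a b. Ymat 3 a b W x - 0"] cont_Ymat[of 3 W x 0] by simp
  have EY: "expectation (\<lambda>z. Ymat 3 (w z) (al z) W x) = 0"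
  proof (subst vec_eq_iff, intro allI, subst vec_eq_iff, intro allI)
    fix i j
    have "expectation (\<lambda>z. Ymat 3 (w z) (al z) W x) $ i $ j = expectation (\<lambda>z. Ymat 3 (w z) (al z) W x $ i $ j)"
      by (rule E_comp[OF intY])
    also have "\<dots> = expectation (\<lambda>z. (g (w z) * r * x $ i) * (al z \<bullet> W $ j) + (g (w z) * r * x $ j) * (al z \<bullet> W $ i))"
      by (simp add: Y outer_def matrix_vector_mul_component inner_commute algebra_simps)
    also have "\<dots> = expectation (\<lambda>z. (g (w z) * r * x $ i) * (al z \<bullet> W $ j)) + expectation (\<lambda>z. (g (w z) * r * x $ j) * (al z \<bullet> W $ i))"
    proof (rule Bochner_Integration.integral_add)
      show "integrable M (\<lambda>z. (g (w z) * r * x $ i) * (al z \<bullet> W $ j))"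
        using INT[of "\<lambda>a b. (g a * r * x $ i) * (b \<bullet> W $ j)"] by (simp add: g_def continuous_intros)
      show "integrable M (\<lambda>z. (g (w z) * r * x $ j) * (al z \<bullet> W $ i))"
        using INT[of "\<lambda>a b. (g a * r * x $ j) * (b \<bullet> W $ i)"] by (simp add: g_def continuous_intros)
    qed
    also have "\<dots> = 0"
      using IND1[of "\<lambda>y. g y * r * x $ i" "W $ j"] IND1[of "\<lambda>y. g y * r * x $ j" "W $ i"]
      by (simp add: g_def continuous_intros)
    finally show "expectation (\<lambda>z. Ymat 3 (w z) (al z) W x) $ i $ j = 0 $ i $ j" by simp
  qed
  have intPhi: "integrable M (\<lambda>z. matpow (Ymat 3 (w z) (al z) W x - 0) p)"
    by (rule INT[of "\<lambda>a b. matpow (Ymat 3 a b W x - 0) p"]) (intro continuous_intros cont_Ymat)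
  define L where "L = fact p / 2 * (10 * q * Xn^2) ^ (p - 2) * (15 * md ^ 3 / Dd ^ 3)"
  have L0: "L \<ge> 0"
  proof -
    have "Dd > 0" using D1 by simp
    moreover have "md > 0" using qpos \<open>Dd > 0\<close> by (simp add: zero_less_divide_iff)
    ultimately show ?thesis by (simp add: L_def q_def)
  qed
  show ?thesis
    unfolding EY
  proof (rule loewnerI)
    fix v :: "real^'d"
    define u where "u = transpose W *v v"
    have rhs: "v \<bullet> (((fact p / 2 * Rk 3 md Dd Xn ^ (p - 2)) *\<^sub>R Asq 3 md Dd x) *v v)
        = L * ((2 / Dd) * (r^2)^2 * (v \<bullet> v) + r^2 * ((x \<bullet> v) * (x \<bullet> v)))"
      by (simp add: Asq_def S2_def S1_def Rk_def mv_scale mv_add inner_add_right inner_outer L_def q_def r_def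
                    power2_eq_square power4_eq_xxxx algebra_simps)
         (use D1 in \<open>simp add: field_simps\<close>)
    have rhs0: "0 \<le> L * ((2 / Dd) * (r^2)^2 * (v \<bullet> v) + r^2 * ((x \<bullet> v) * (x \<bullet> v)))"
    proof -
      have a: "0 \<le> (2 / Dd) * (r^2)^2 * (v \<bullet> v)" using D1 by simp
      have b: "0 \<le> r^2 * ((x \<bullet> v) * (x \<bullet> v))" by simp
      show ?thesis by (rule mult_nonneg_nonneg[OF L0 add_nonneg_nonneg[OF a b]])
    qed
    define \<rho> where "\<rho> = r ^ 2"
    have pw: "v \<bullet> (matpow (Ymat 3 (w z) (al z) W x - 0) p *v v)
       = (if even p then (g (w z) * r) ^ p * \<rho> ^ (p div 2 - 1) * ((x \<bullet> v) * (x \<bullet> v) + \<rho> * ((al z \<bullet> u) * (al z \<bullet> u)))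
          else (g (w z) * r) ^ p * \<rho> ^ (p div 2) * (2 * (x \<bullet> v)) * (al z \<bullet> u))"
      if n1: "norm (al z) = 1" for z
    proof -
      define b where "b = W *v al z"
      define N where "N = outer x b + outer b x"
      define E2 where "E2 = outer x x + \<rho> *\<^sub>R outer b b"
      have bb: "b \<bullet> b = 1" using n1 inner_WW[OF WW] by (simp add: b_def norm_eq_sqrt_inner)
      have xb: "x \<bullet> b = 0" "b \<bullet> x = 0" using Wp by (simp_all add: b_def inner_commute)
      have xx: "x \<bullet> x = \<rho>" by (simp add: \<rho>_def r_def power2_norm_eq_inner)
      have NN: "N ** N = E2"
        by (simp add: N_def E2_def mm_add_l mm_add_r outer_mult bb xb xx)
      have NE: "N ** E2 = \<rho> *\<^sub>R N"
        by (simp add: N_def E2_def mm_add_l mm_add_r mm_scale_r outer_mult bb xb xx algebra_simps)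
      have Phi: "matpow (Ymat 3 (w z) (al z) W x) p = (g (w z) * r) ^ p *\<^sub>R matpow N p"
        by (simp add: Y matpow_scale N_def b_def)
      have bv: "b \<bullet> v = al z \<bullet> u" by (simp add: b_def inner_Wv u_def)
      show ?thesis
      proof (cases "even p")
        case True
        then obtain j where j: "p = 2 * j" by blast
        have j1: "j \<ge> 1" using p j by simp
        have "v \<bullet> (matpow N p *v v) = \<rho> ^ (j - 1) * ((x \<bullet> v) * (x \<bullet> v) + \<rho> * ((b \<bullet> v) * (b \<bullet> v)))"
          by (simp add: j matpow_N_even[OF NN NE j1] E2_def mv_scale mv_add inner_add_right inner_outer)
        then show ?thesis using True unfolding diff_zero Phi by (simp add: mv_scale j bv)
      next
        case False
        then obtain j where j: "p = 2 * j + 1" using oddE by blast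
        have "v \<bullet> (matpow N p *v v) = \<rho> ^ j * (2 * (x \<bullet> v) * (b \<bullet> v))"
          unfolding j matpow_N[OF NN NE] by (simp add: N_def mv_scale mv_add inner_add_right inner_outer inner_commute)
        then show ?thesis using False unfolding diff_zero Phi by (simp add: mv_scale j bv)
      qed
    qed
    have "v \<bullet> (expectation (\<lambda>z. matpow (Ymat 3 (w z) (al z) W x - 0) p) *v v)
       = expectation (\<lambda>z. v \<bullet> (matpow (Ymat 3 (w z) (al z) W x - 0) p *v v))"
      by (rule E_quad[OF intPhi])
    also have "\<dots> = expectation (\<lambda>z. (if even p then (g (w z) * r) ^ p * \<rho> ^ (p div 2 - 1) * ((x \<bullet> v) * (x \<bullet> v) + \<rho> * ((al z \<bullet> u) * (al z \<bullet> u)))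
          else (g (w z) * r) ^ p * \<rho> ^ (p div 2) * (2 * (x \<bullet> v)) * (al z \<bullet> u)))"
    proof (rule integral_cong_AE)
      show "AE z in M. v \<bullet> (matpow (Ymat 3 (w z) (al z) W x - 0) p *v v)
         = (if even p then (g (w z) * r) ^ p * \<rho> ^ (p div 2 - 1) * ((x \<bullet> v) * (x \<bullet> v) + \<rho> * ((al z \<bullet> u) * (al z \<bullet> u)))
          else (g (w z) * r) ^ p * \<rho> ^ (p div 2) * (2 * (x \<bullet> v)) * (al z \<bullet> u))"
        using aln by (rule AE_mp) (rule AE_I2, blast intro: pw)
      show "(\<lambda>z. v \<bullet> (matpow (Ymat 3 (w z) (al z) W x - 0) p *v v)) \<in> borel_measurable M"
      proof -
        have "continuous_on UNIV (\<lambda>y. v \<bullet> (matpow (Ymat 3 (fst y) (snd y) W x - 0) p *v v))"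
          by (intro continuous_intros cont_Ymat)
        then show ?thesis
          using borel_measurable_continuous_Pair[OF wm alm, of "\<lambda>a b. v \<bullet> (matpow (Ymat 3 a b W x - 0) p *v v)"]
          by simp
      qed
    qed (unfold g_def, measurable)
    also have "\<dots> \<le> L * ((2 / Dd) * (r^2)^2 * (v \<bullet> v) + r^2 * ((x \<bullet> v) * (x \<bullet> v)))"
    proof (cases "even p")
      case False
      have "expectation (\<lambda>z. (g (w z) * r) ^ p * \<rho> ^ (p div 2) * (2 * (x \<bullet> v)) * (al z \<bullet> u)) = 0"
        using IND1[of "\<lambda>y. (g y * r) ^ p * \<rho> ^ (p div 2) * (2 * (x \<bullet> v))" u]
        by (simp add: g_def continuous_intros)
      then show ?thesis using False rhs0 by simp
    next
      case True
      then obtain j where j: "p = 2 * j" by blast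
      define Gp where "Gp = expectation (\<lambda>z. g (w z) ^ p)"
      have Gp0: "Gp \<ge> 0" unfolding Gp_def
        by (rule integral_nonneg_AE) (use True in \<open>auto simp: zero_le_even_power\<close>)
      have GpK: "Gp \<le> fact p / 2 * (10 * q) ^ (p - 2) * (15 * md ^ 3 / Dd ^ 3)"
        using I3 by (simp add: Gp_def g_def q_def)
      have rr: "r ^ p * \<rho> ^ (p div 2 - 1) = r^2 * (r^2) ^ (p - 2)"
      proof -
        have "r ^ p * \<rho> ^ (p div 2 - 1) = (r^2) ^ j * (r^2) ^ (j - 1)" by (simp add: \<rho>_def j power_mult)
        also have "\<dots> = (r^2) ^ (j + (j - 1))" by (simp add: power_add)
        also have "j + (j - 1) = 1 + (p - 2)" using j p by simp
        finally show ?thesis by (simp add: power_add)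
      qed
      have iG: "integrable M (\<lambda>z. g (w z) ^ p)" by (rule intw) (simp add: g_def continuous_intros)
      have iG2: "integrable M (\<lambda>z. g (w z) ^ p * ((al z \<bullet> u) * (al z \<bullet> u)))"
        using INT[of "\<lambda>a b. g a ^ p * ((b \<bullet> u) * (b \<bullet> u))"] by (simp add: g_def continuous_intros)
      have "expectation (\<lambda>z. (g (w z) * r) ^ p * \<rho> ^ (p div 2 - 1) * ((x \<bullet> v) * (x \<bullet> v) + \<rho> * ((al z \<bullet> u) * (al z \<bullet> u))))
          = expectation (\<lambda>z. (r^2 * (r^2) ^ (p - 2)) * ((x \<bullet> v) * (x \<bullet> v) * g (w z) ^ p + \<rho> * (g (w z) ^ p * ((al z \<bullet> u) * (al z \<bullet> u)))))"
        by (rule Bochner_Integration.integral_cong[OF refl]) (simp add: power_mult_distrib rr[symmetric] algebra_simps)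
      also have "\<dots> = (r^2 * (r^2) ^ (p - 2)) * ((x \<bullet> v) * (x \<bullet> v) * Gp + \<rho> * (Gp * ((u \<bullet> u) / CARD('e))))"
        using IND2[of "\<lambda>y. g y ^ p" u u] iG iG2 by (simp add: Gp_def g_def continuous_intros)
      also have "\<dots> = Gp * (r^2) ^ (p - 2) * (r^2 * ((x \<bullet> v) * (x \<bullet> v)) + (r^2)^2 * ((u \<bullet> u) / (Dd - 1)))"
        by (simp add: Dd \<rho>_def algebra_simps power2_eq_square)
      also have "\<dots> \<le> L * (r^2 * ((x \<bullet> v) * (x \<bullet> v)) + (r^2)^2 * ((2 / Dd) * (v \<bullet> v)))"
      proof (rule mult_mono)
        have r0: "0 \<le> r" by (simp add: r_def)
        show "Gp * (r\<^sup>2) ^ (p - 2) \<le> L"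
        proof -
          have "Gp * (r\<^sup>2) ^ (p - 2) \<le> (fact p / 2 * (10 * q) ^ (p - 2) * (15 * md ^ 3 / Dd ^ 3)) * (Xn^2) ^ (p - 2)"
            by (rule mult_mono[OF GpK pow_le_Xn(2)[OF r0 Xn[folded r_def] p]]) (use Gp0 GpK in auto)
          then show ?thesis unfolding L_def by (simp add: power_mult_distrib algebra_simps)
        qed
        have uv: "u \<bullet> u \<le> v \<bullet> v" using norm_Wt[OF WW, of v] by (simp add: u_def norm_eq_sqrt_inner)
        have "(u \<bullet> u) / (Dd - 1) \<le> (v \<bullet> v) / (Dd - 1)" using uv D1 by (simp add: divide_right_mono)
        also have "\<dots> \<le> (2 / Dd) * (v \<bullet> v)"
        proof -
          have "1 / (Dd - 1) \<le> 2 / Dd" using D1 by (simp add: field_simps)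
          then show ?thesis by (metis mult_right_mono inner_ge_zero times_divide_eq_left mult_1)
        qed
        finally have "(u \<bullet> u) / (Dd - 1) \<le> (2 / Dd) * (v \<bullet> v)" .
        then show "r^2 * ((x \<bullet> v) * (x \<bullet> v)) + (r^2)^2 * ((u \<bullet> u) / (Dd - 1)) \<le> r^2 * ((x \<bullet> v) * (x \<bullet> v)) + (r^2)^2 * ((2 / Dd) * (v \<bullet> v))"
          by (intro add_left_mono mult_left_mono) auto
      qed (use L0 D1 in \<open>auto intro!: mult_nonneg_nonneg add_nonneg_nonneg\<close>)
      also have "\<dots> = L * ((2 / Dd) * (r^2)^2 * (v \<bullet> v) + r^2 * ((x \<bullet> v) * (x \<bullet> v)))"
        by (simp add: algebra_simps)
      finally show ?thesis using True by simp
    qed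
    also have "\<dots> = v \<bullet> (((fact p / 2 * Rk 3 md Dd Xn ^ (p - 2)) *\<^sub>R Asq 3 md Dd x) *v v)"
      by (rule rhs[symmetric])
    finally show "v \<bullet> (expectation (\<lambda>z. matpow (Ymat 3 (w z) (al z) W x - 0) p) *v v)
        \<le> v \<bullet> (((fact p / 2 * Rk 3 md Dd Xn ^ (p - 2)) *\<^sub>R Asq 3 md Dd x) *v v)" .
  qed
qed

end


theorem lemma3:
  fixes M :: "'a measure"
    and x :: "'n::finite \<Rightarrow> real^'d::finite"
    and W :: "'n \<Rightarrow> real^'e::finite^'d"
    and \<omega> :: "'n \<Rightarrow> 'a \<Rightarrow> real"
    and \<alpha> :: "'n \<Rightarrow> 'a \<Rightarrow> real^'e"
    and m p k :: nat and t :: 'n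
  assumes "prob_space M"
    and "CARD('d) \<ge> 2"
    and "CARD('e) + 1 = CARD('d)"
    and "1 \<le> m" and "m \<le> CARD('d)"
    and "\<forall>s. x s \<noteq> 0"
    and "\<forall>s. prob_space.beta_distributed M (\<omega> s) (real m / 2) ((real CARD('d) - real m) / 2)"
    and "\<forall>s. \<alpha> s \<in> borel_measurable M \<and> distr M borel (\<alpha> s) = uniform_sphere"
    and "\<forall>s. \<forall>A\<in>sets (borel :: real measure). \<forall>B\<in>sets (borel :: (real^'e) measure).
         measure M ((\<omega> s) -` A \<inter> (\<alpha> s) -` B \<inter> space M)
         = measure M ((\<omega> s) -` A \<inter> space M) * measure M ((\<alpha> s) -` B \<inter> space M)"
    and "\<forall>s. transpose (W s) ** W s = mat 1"
    and "\<forall>s. span (columns (W s)) = {v. v \<bullet> x s = 0}"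
    and "p \<ge> 2"
    and "k \<in> {1, 2, 3}"
  shows "loewner_le
     (prob_space.expectation M (\<lambda>z. matpow
        (Ymat k (\<omega> t z) (\<alpha> t z) (W t) (x t)
         - prob_space.expectation M (\<lambda>z'. Ymat k (\<omega> t z') (\<alpha> t z') (W t) (x t))) p))
     ((fact p / 2 * Rk k (real m) (real CARD('d)) (Max (range (\<lambda>s. norm (x s)))) ^ (p - 2))
        *\<^sub>R Asq k (real m) (real CARD('d)) (x t))"
proof -
  interpret prob_space M by (rule assms(1))
  have bd: "beta_distributed (\<omega> t) (real m / 2) ((real CARD('d) - real m) / 2)" using assms(7) by simp
  have a0: "real m / 2 > 0" using assms(4) by simp
  have b0: "(real CARD('d) - real m) / 2 \<ge> 0" using assms(5) by simp
  interpret ms: msetup M "\<omega> t" "\<alpha> t"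
  proof
    show "\<omega> t \<in> borel_measurable M" by (rule beta_meas[OF bd])
    show "\<alpha> t \<in> borel_measurable M" using assms(8) by simp
    show "AE z in M. 0 \<le> \<omega> t z \<and> \<omega> t z \<le> 1" by (rule beta_AE01[OF bd b0])
    show "distr M borel (\<alpha> t) = uniform_sphere" using assms(8) by simp
    show "\<forall>A\<in>sets (borel :: real measure). \<forall>B\<in>sets (borel :: (real^'e) measure).
         measure M (\<omega> t -` A \<inter> \<alpha> t -` B \<inter> space M)
         = measure M (\<omega> t -` A \<inter> space M) * measure M (\<alpha> t -` B \<inter> space M)"
      using assms(9) by blast
  qed
  interpret bs: bsetup M "\<omega> t" m "CARD('d)"
  proof
    show "\<omega> t \<in> borel_measurable M" by (rule beta_meas[OF bd])
    show "AE z in M. 0 \<le> \<omega> t z \<and> \<omega> t z \<le> 1" by (rule beta_AE01[OF bd b0])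
    show "expectation (\<lambda>z. \<omega> t z ^ Suc n) = (real m / 2 + real n) / (real m / 2 + (real CARD('d) - real m) / 2 + real n) * expectation (\<lambda>z. \<omega> t z ^ n)" for n
      by (rule beta_moment_Suc[OF bd a0 b0])
  qed (use assms(2,4,5) in auto)
  have Xn: "norm (x t) \<le> Max (range (\<lambda>s. norm (x s)))" by (rule Max_ge) auto
  have qpos: "real m / real CARD('d) > 0" using assms(4) by simp
  have Dd: "real CARD('e) = real CARD('d) - 1" using assms(3) by (metis add_diff_cancel_right' of_nat_1 of_nat_add)
  have WW: "transpose (W t) ** W t = mat 1" using assms(10) by simp
  have Wp: "\<And>a. x t \<bullet> (W t *v a) = 0" using W_perp assms(11) by blast
  have p: "p \<ge> 2" by (rule assms(12))
  consider "k = 1" | "k = 2" | "k = 3" using assms(13) by auto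
  then show ?thesis
  proof cases
    case 1
    show ?thesis unfolding 1
      by (rule ms.case1[OF p Xn qpos]) (use bs.I1[OF p] in \<open>simp add: bs.q_def\<close>)
  next
    case 2
    show ?thesis unfolding 2
      by (rule ms.case2[OF p Xn qpos Dd WW]) (use bs.I2[OF p] in \<open>simp add: bs.q_def\<close>)
  next
    case 3
    show ?thesis unfolding 3
      by (rule ms.case3[OF p Xn qpos Dd WW Wp]) (use bs.I3[OF p] in \<open>simp add: bs.q_def\<close>)
  qed
qed


end
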